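(* Let $n\geq2$ and $F\in{\sf Aut}(\mathbb L_n)$. If $F(0,z')=(0,z')$ for all $z'\in L_{n-1}$, then $F$ is the identity.
   Context: $L_m:=\{z\in\mathbb C^m:\|z\|<1,\ \sqrt{\|z\|^4-|\sum_jz_j^2|^2}<1-\|z\|^2\}$ with $\|z\|^2=\sum_j|z_j|^2$. $\Lambda_n(z)=(z_1^2,z_2,\dots,z_n)$ and $\mathbb L_n:=\Lambda_n(L_n)$; note $\{0\}\times L_{n-1}\subset\mathbb L_n$. ${\sf Aut}(\mathbb L_n)$ is the group of biholomorphic self-maps of $\mathbb L_n$. *)

theory Defs
  imports "HOL-Analysis.Analysis"
begin

(* Points of C^n are vectors complex^'n; the coordinate set I allows us to
   speak of the domain L_m on a subset of the coordinates (e.g. L_{n-1} on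
   the coordinates other than the distinguished first one). *)

definition sqnorm_on :: "'n::finite set \<Rightarrow> complex^'n \<Rightarrow> real" where
  "sqnorm_on I z = (\<Sum>j\<in>I. (cmod (z$j))^2)"

definition Lset_on :: "'n::finite set \<Rightarrow> (complex^'n) set" where
  "Lset_on I = {z. sqnorm_on I z < 1 \<and>
      sqrt ((sqnorm_on I z)^2 - (cmod (\<Sum>j\<in>I. (z$j)^2))^2) < 1 - sqnorm_on I z}"

definition Lam :: "'n::finite \<Rightarrow> complex^'n \<Rightarrow> complex^'n" where
  "Lam a0 z = (\<chi> j. if j = a0 then (z$j)^2 else z$j)"

definition LL :: "'n::finite \<Rightarrow> (complex^'n) set" where
  "LL a0 = Lam a0 ` Lset_on UNIV"

definition holo_on :: "(complex^'n::finite \<Rightarrow> complex^'m::finite) \<Rightarrow> (complex^'n) set \<Rightarrow> bool" where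
  "holo_on f S \<longleftrightarrow> (\<forall>z\<in>S. \<exists>f'. (f has_derivative f') (at z) \<and>
       (\<forall>c v. f' (c *s v) = c *s f' v))"

definition Aut :: "(complex^'n::finite) set \<Rightarrow> (complex^'n \<Rightarrow> complex^'n) set" where
  "Aut D = {F. holo_on F D \<and> F ` D \<subseteq> D \<and>
      (\<exists>G. holo_on G D \<and> G ` D \<subseteq> D \<and> (\<forall>z\<in>D. G (F z) = z \<and> F (G z) = z))}"

end

theory Submission
  imports Defs "HOL-Complex_Analysis.Complex_Analysis"
begin

no_notation fps_nth (infixl \<open>$\<close> 75)

definition wt :: "'n::finite \<Rightarrow> 'n \<Rightarrow> nat" where
  "wt a0 j = (if j = a0 then 2 else 1)"

definition Rm :: "'n::finite \<Rightarrow> complex \<Rightarrow> complex^'n \<Rightarrow> complex^'n" where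
  "Rm a0 c x = (\<chi> j. c ^ wt a0 j * x$j)"

definition Nf :: "'n::finite \<Rightarrow> complex^'n \<Rightarrow> real" where
  "Nf a0 w = cmod (w$a0) + (\<Sum>j\<in>-{a0}. (cmod (w$j))^2)"

definition Qf :: "'n::finite \<Rightarrow> complex^'n \<Rightarrow> real" where
  "Qf a0 w = cmod (w$a0 + (\<Sum>j\<in>-{a0}. (w$j)^2))"

definition Gf :: "'n::finite \<Rightarrow> complex^'n \<Rightarrow> real" where
  "Gf a0 w = Nf a0 w + sqrt ((Nf a0 w)^2 - (Qf a0 w)^2)"

lemma Qf_le_Nf: "Qf a0 w \<le> Nf a0 w"
proof -
  have "Qf a0 w \<le> cmod (w$a0) + cmod (\<Sum>j\<in>-{a0}. (w$j)^2)"
    unfolding Qf_def by (rule norm_triangle_ineq)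
  also have "cmod (\<Sum>j\<in>-{a0}. (w$j)^2) \<le> (\<Sum>j\<in>-{a0}. cmod ((w$j)^2))"
    by (rule norm_sum)
  finally show ?thesis unfolding Nf_def by (simp add: norm_power)
qed

lemma Qf_nonneg: "0 \<le> Qf a0 w" by (simp add: Qf_def)
lemma Nf_nonneg: "0 \<le> Nf a0 w" unfolding Nf_def by (intro add_nonneg_nonneg sum_nonneg) auto

lemma sqrt_part_nonneg: "0 \<le> sqrt ((Nf a0 w)^2 - (Qf a0 w)^2)"
  using Qf_le_Nf[of a0 w] Qf_nonneg[of a0 w] by (simp add: power_mono)

lemma aux_iff: "0 \<le> (r::real) \<Longrightarrow> (S < 1 \<and> r < 1 - S) \<longleftrightarrow> S + r < 1"
  by auto

lemma sum_split_a0: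
  fixes f :: "'n::finite \<Rightarrow> 'a::comm_monoid_add"
  shows "(\<Sum>j\<in>UNIV. f j) = f a0 + (\<Sum>j\<in>-{a0}. f j)"
proof -
  have "UNIV = insert a0 (-{a0})" by auto
  then show ?thesis by (metis Compl_iff finite insertI1 sum.insert)
qed

lemma LL_char: fixes a0 :: "'n::finite" shows "LL a0 = {w. Gf a0 w < 1}"
proof -
  have key: "z \<in> Lset_on UNIV \<longleftrightarrow> Gf a0 (Lam a0 z) < 1" for z :: "complex^'n"
  proof -
    have N: "sqnorm_on UNIV z = Nf a0 (Lam a0 z)"
      unfolding sqnorm_on_def Nf_def Lam_def by (simp add: sum_split_a0[of _ a0] norm_power)
    have Q: "cmod (\<Sum>j\<in>UNIV. (z$j)^2) = Qf a0 (Lam a0 z)"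
      unfolding Qf_def Lam_def by (simp add: sum_split_a0[of _ a0])
    have s: "0 \<le> sqrt ((Nf a0 (Lam a0 z))^2 - (Qf a0 (Lam a0 z))^2)" by (rule sqrt_part_nonneg)
    show ?thesis unfolding Lset_on_def Gf_def mem_Collect_eq N Q using aux_iff[OF s] .
  qed
  show ?thesis
  proof (intro set_eqI iffI)
    fix w assume "w \<in> LL a0"
    then obtain z where "z \<in> Lset_on UNIV" "w = Lam a0 z" unfolding LL_def by auto
    then show "w \<in> {w. Gf a0 w < 1}" using key by auto
  next
    fix w assume w: "w \<in> {w. Gf a0 w < 1}"
    define z where "z = (\<chi> j. if j = a0 then csqrt (w$a0) else w$j)"
    have "Lam a0 z = w" unfolding z_def Lam_def by (simp add: vec_eq_iff)
    then show "w \<in> LL a0" using w key[of z] unfolding LL_def by auto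
  qed
qed

lemma Nf_Rm: "Nf a0 (Rm a0 c w) = (cmod c)^2 * Nf a0 w"
  unfolding Nf_def Rm_def wt_def by (simp add: norm_mult norm_power sum_distrib_left power_mult_distrib distrib_left)

lemma Qf_Rm: "Qf a0 (Rm a0 c w) = (cmod c)^2 * Qf a0 w"
proof -
  have "w$a0 * c^2 + (\<Sum>j\<in>-{a0}. (c * w$j)^2) = c^2 * (w$a0 + (\<Sum>j\<in>-{a0}. (w$j)^2))"
    by (simp add: power_mult_distrib sum_distrib_left algebra_simps)
  then show ?thesis unfolding Qf_def Rm_def wt_def
    by (simp add: norm_mult norm_power mult.commute)
qed

lemma Gf_Rm: "Gf a0 (Rm a0 c w) = (cmod c)^2 * Gf a0 w"
proof -
  have "(((cmod c)^2 * Nf a0 w))^2 - ((cmod c)^2 * Qf a0 w)^2 = ((cmod c)^2)^2 * ((Nf a0 w)^2 - (Qf a0 w)^2)"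
    by (simp add: algebra_simps power_mult_distrib)
  moreover have "sqrt (t^2 * X) = t * sqrt X" if "t \<ge> 0" for X t :: real
    using that by (simp add: real_sqrt_mult)
  moreover have "(cmod c)^2 \<ge> 0" by simp
  ultimately have "sqrt ((((cmod c)^2 * Nf a0 w))^2 - ((cmod c)^2 * Qf a0 w)^2) = (cmod c)^2 * sqrt ((Nf a0 w)^2 - (Qf a0 w)^2)"
    by (metis (no_types))
  then show ?thesis unfolding Gf_def Nf_Rm Qf_Rm by (simp add: algebra_simps)
qed

lemma Gf_nonneg: "0 \<le> Gf a0 w"
  unfolding Gf_def using Nf_nonneg sqrt_part_nonneg by (metis add_nonneg_nonneg)

lemma Rm_in_LL: assumes "w \<in> LL a0" "cmod c \<le> 1" shows "Rm a0 c w \<in> LL a0"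
proof -
  have g: "Gf a0 w < 1" "0 \<le> Gf a0 w" using assms(1) Gf_nonneg[of a0 w] unfolding LL_char by auto
  have "(cmod c)^2 \<le> 1" using assms(2) by (simp add: power_le_one)
  then have "(cmod c)^2 * Gf a0 w \<le> 1 * Gf a0 w" using g by (intro mult_right_mono) auto
  then show ?thesis unfolding LL_char using g by (simp add: Gf_Rm)
qed

lemma Rm_mult: "Rm a0 c (Rm a0 d x) = Rm a0 (c*d) x"
  unfolding Rm_def by (simp add: vec_eq_iff power_mult_distrib)

lemma Rm_1[simp]: "Rm a0 1 x = x"
  unfolding Rm_def by (simp add: vec_eq_iff)

lemma Rm_nth: "Rm a0 c x $ j = c ^ wt a0 j * x$j"
  unfolding Rm_def by simp

lemma Rm_inv: "c \<noteq> 0 \<Longrightarrow> Rm a0 c (Rm a0 (inverse c) x) = x"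
  by (simp add: Rm_mult)

lemma open_LL: "open (LL a0)"
proof -
  have "continuous_on UNIV (Gf a0)"
    unfolding Gf_def Nf_def Qf_def by (intro continuous_intros)
  then show ?thesis unfolding LL_char
    by (intro open_Collect_less) (auto intro: continuous_intros)
qed

lemma zero_in_LL: "0 \<in> LL a0"
  unfolding LL_char Gf_def Nf_def Qf_def by simp

lemma LL_coord_bound: assumes "w \<in> LL a0" shows "cmod (w$j) < 1"
proof -
  have G: "Nf a0 w < 1" using assms sqrt_part_nonneg[of a0 w] unfolding LL_char Gf_def mem_Collect_eq by linarith
  show ?thesis
  proof (cases "j = a0")
    case True
    have "cmod (w$a0) \<le> Nf a0 w" unfolding Nf_def by (intro add_increasing2 sum_nonneg) auto
    then show ?thesis using G True by simp
  next
    case False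
    have "(cmod (w$j))^2 \<le> (\<Sum>j\<in>-{a0}. (cmod (w$j))^2)"
      using False by (intro member_le_sum) auto
    then have "(cmod (w$j))^2 \<le> Nf a0 w" unfolding Nf_def by (simp add: add_increasing)
    then have "(cmod (w$j))^2 < 1" using G by simp
    then show ?thesis by (simp add: power_less_one_iff abs_square_less_1)
  qed
qed

lemma LL_ext: assumes "w \<in> LL a0" shows "\<exists>\<rho>>1. \<forall>c. cmod c < \<rho> \<longrightarrow> Rm a0 c w \<in> LL a0"
proof -
  have g: "Gf a0 w < 1" using assms LL_char by auto
  define \<rho> where "\<rho> = (if Gf a0 w = 0 then 2 else sqrt (1 / Gf a0 w))"
  have "\<rho> > 1" using g Gf_nonneg[of a0 w] unfolding \<rho>_def by auto
  moreover have "Rm a0 c w \<in> LL a0" if "cmod c < \<rho>" for c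
  proof (cases "Gf a0 w = 0")
    case True then show ?thesis unfolding LL_char by (simp add: Gf_Rm)
  next
    case False
    then have gp: "Gf a0 w > 0" using Gf_nonneg[of a0 w] by auto
    have "(cmod c)^2 < \<rho>^2" using that by (simp add: power_strict_mono)
    also have "\<rho>^2 = 1 / Gf a0 w" using False gp unfolding \<rho>_def by simp
    finally have "(cmod c)^2 * Gf a0 w < 1" using gp by (simp add: field_simps)
    then show ?thesis unfolding LL_char by (simp add: Gf_Rm)
  qed
  ultimately show ?thesis by blast
qed

lemma H_in_LL: "w$a0 = 0 \<Longrightarrow> (w \<in> LL a0 \<longleftrightarrow> w \<in> Lset_on (-{a0}))"
proof -
  assume w0: "w$a0 = 0"
  have "sqnorm_on (-{a0}) w = Nf a0 w" "cmod (\<Sum>j\<in>-{a0}. (w$j)^2) = Qf a0 w"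
    unfolding sqnorm_on_def Nf_def Qf_def using w0 by auto
  then show ?thesis unfolding LL_char Lset_on_def Gf_def mem_Collect_eq using aux_iff[OF sqrt_part_nonneg[of a0 w]] by simp
qed

lemma bl_smult: "bounded_linear (\<lambda>h::complex. h *s (v::complex^'n::finite))"
proof -
  have "linear (\<lambda>h::complex. h *s v)"
    by (intro linearI) (simp_all add: vec_eq_iff algebra_simps)
  then show ?thesis by (simp add: linear_conv_bounded_linear)
qed

lemma Rm_add: "Rm a0 c (x + y) = Rm a0 c x + Rm a0 c y"
  unfolding Rm_def by (simp add: vec_eq_iff algebra_simps)

lemma Rm_smult: "Rm a0 c (d *s v) = d *s Rm a0 c v"
  unfolding Rm_def by (simp add: vec_eq_iff algebra_simps)

lemma Rm_diff: "Rm a0 c (x - y) = Rm a0 c x - Rm a0 c y"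
  unfolding Rm_def by (simp add: vec_eq_iff algebra_simps)

lemma bl_Rm: "bounded_linear (Rm a0 c)"
proof -
  have "linear (Rm a0 c)"
    by (intro linearI) (simp_all add: Rm_def vec_eq_iff algebra_simps)
  then show ?thesis by (simp add: linear_conv_bounded_linear)
qed

lemma vec_has_derivative_at:
  fixes f :: "'a::real_normed_vector \<Rightarrow> 'b::real_normed_vector^'n::finite"
  assumes "\<And>i. ((\<lambda>x. f x $ i) has_derivative (\<lambda>h. f' h $ i)) (at x)" "bounded_linear f'"
  shows "(f has_derivative f') (at x)"
proof -
  have "((\<lambda>y. ((f y - f x) - f' (y - x)) /\<^sub>R norm (y - x)) \<longlongrightarrow> 0) (at x)"
  proof (rule vec_tendstoI)
    fix i
    have "((\<lambda>y. ((f y $ i - f x $ i) - f' (y - x) $ i) /\<^sub>R norm (y - x)) \<longlongrightarrow> 0) (at x)"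
      using assms(1)[of i] unfolding has_derivative_at_within by simp
    then show "((\<lambda>y. (((f y - f x) - f' (y - x)) /\<^sub>R norm (y - x)) $ i) \<longlongrightarrow> 0 $ i) (at x)"
      by simp
  qed
  then show ?thesis using assms(2) unfolding has_derivative_at_within by simp
qed

definition Rmd :: "'n::finite \<Rightarrow> complex \<Rightarrow> complex^'n \<Rightarrow> complex^'n" where
  "Rmd a0 c u = (\<chi> j. of_nat (wt a0 j) * c ^ (wt a0 j - 1) * u$j)"

lemma Rm_path_deriv:
  "((\<lambda>\<zeta>. Rm a0 \<zeta> u) has_derivative (\<lambda>h. h *s Rmd a0 \<zeta> u)) (at \<zeta>)"
proof (rule vec_has_derivative_at[OF _ bl_smult])
  fix i
  have "((\<lambda>\<zeta>. \<zeta> ^ wt a0 i * u$i) has_field_derivative (of_nat (wt a0 i) * \<zeta> ^ (wt a0 i - 1) * u$i)) (at \<zeta>)"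
    by (auto intro!: derivative_eq_intros)
  then have "((\<lambda>\<zeta>. \<zeta> ^ wt a0 i * u$i) has_derivative (\<lambda>h. h * (of_nat (wt a0 i) * \<zeta> ^ (wt a0 i - 1) * u$i))) (at \<zeta>)"
    unfolding has_field_derivative_def by (rule has_derivative_eq_rhs) (auto simp: fun_eq_iff mult.commute)
  then show "((\<lambda>\<zeta>. Rm a0 \<zeta> u $ i) has_derivative (\<lambda>h. (h *s Rmd a0 \<zeta> u) $ i)) (at \<zeta>)"
    unfolding Rm_def Rmd_def by simp
qed

lemma path_field_deriv:
  assumes S: "(S has_derivative S') (at (p \<zeta>))" and h: "\<forall>c v. S' (c *s v) = c *s S' v"
    and p: "(p has_derivative (\<lambda>h. h *s v)) (at \<zeta>)"
  shows "((\<lambda>\<zeta>. S (p \<zeta>) $ j) has_field_derivative (S' v $ j)) (at \<zeta>)"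
proof -
  have "((\<lambda>x. S (p x)) has_derivative (\<lambda>h. S' (h *s v))) (at \<zeta>)"
    using diff_chain_at[OF p S] by (simp add: o_def)
  then have "((\<lambda>x. S (p x) $ j) has_derivative (\<lambda>h. S' (h *s v) $ j)) (at \<zeta>)"
    by (rule bounded_linear.has_derivative[OF bounded_linear_vec_nth])
  moreover have "(\<lambda>h. S' (h *s v) $ j) = (*) (S' v $ j)"
    using h by (auto simp: mult.commute)
  ultimately show ?thesis unfolding has_field_derivative_def by simp
qed

lemma holo_on_comp:
  assumes "holo_on f A" "holo_on g B" "f ` A \<subseteq> B"
  shows "holo_on (\<lambda>x. g (f x)) A"
  unfolding holo_on_def
proof
  fix z assume z: "z \<in> A"
  obtain f' where f': "(f has_derivative f') (at z)" "\<forall>c v. f' (c *s v) = c *s f' v"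
    using assms(1) z unfolding holo_on_def by blast
  obtain g' where g': "(g has_derivative g') (at (f z))" "\<forall>c v. g' (c *s v) = c *s g' v"
    using assms(2,3) z unfolding holo_on_def by blast
  have "((\<lambda>x. g (f x)) has_derivative (\<lambda>v. g' (f' v))) (at z)"
    using diff_chain_at[OF f'(1) g'(1)] by (simp add: o_def)
  then show "\<exists>F'. ((\<lambda>x. g (f x)) has_derivative F') (at z) \<and> (\<forall>c v. F' (c *s v) = c *s F' v)"
    using f'(2) g'(2) by auto
qed

lemma holo_on_Rm: "holo_on (Rm a0 c) A"
  unfolding holo_on_def using bounded_linear_imp_has_derivative[OF bl_Rm] Rm_smult by blast

lemma holo_on_id: "holo_on (\<lambda>x. x) A"
  unfolding holo_on_def by (auto intro: has_derivative_ident)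

lemma holo_on_iter:
  assumes "holo_on S D" "S ` D \<subseteq> D"
  shows "holo_on (S ^^ k) D \<and> (S ^^ k) ` D \<subseteq> D"
proof (induction k)
  case 0 then show ?case using holo_on_id by (simp add: id_def)
next
  case (Suc k)
  have "holo_on (\<lambda>x. S ((S ^^ k) x)) D" using holo_on_comp[of "S ^^ k" D S D] Suc assms by auto
  then show ?case using Suc assms by (auto simp: o_def)
qed

lemma holo_on_subset: "holo_on S D \<Longrightarrow> A \<subseteq> D \<Longrightarrow> holo_on S A"
  unfolding holo_on_def by blast

lemma holo_cont: "holo_on S D \<Longrightarrow> z \<in> D \<Longrightarrow> isCont S z"
  unfolding holo_on_def by (auto intro: has_derivative_continuous)

lemma holo_cont_on: "holo_on S D \<Longrightarrow> continuous_on D S"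
  by (meson continuous_at_imp_continuous_on holo_cont)

lemma one_var_holo:
  assumes "holo_on S D" "\<forall>\<zeta>\<in>A. Rm a0 \<zeta> u \<in> D"
  shows "(\<lambda>\<zeta>. S (Rm a0 \<zeta> u) $ j) holomorphic_on A"
  unfolding holomorphic_on_def
proof
  fix \<zeta> assume z: "\<zeta> \<in> A"
  obtain S' where S': "(S has_derivative S') (at (Rm a0 \<zeta> u))" "\<forall>c v. S' (c *s v) = c *s S' v"
    using assms z unfolding holo_on_def by blast
  have "((\<lambda>\<zeta>. S (Rm a0 \<zeta> u) $ j) has_field_derivative (S' (Rmd a0 \<zeta> u) $ j)) (at \<zeta>)"
    by (rule path_field_deriv[OF S' Rm_path_deriv])
  then show "(\<lambda>\<zeta>. S (Rm a0 \<zeta> u) $ j) field_differentiable at \<zeta> within A"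
    unfolding field_differentiable_def by (blast intro: has_field_derivative_at_within)
qed

lemma one_var_holo_line:
  assumes "holo_on S D" "\<forall>\<mu>\<in>A. y + \<mu> *s v \<in> D"
  shows "(\<lambda>\<mu>. S (y + \<mu> *s v) $ j) holomorphic_on A"
  unfolding holomorphic_on_def
proof
  fix \<mu> assume z: "\<mu> \<in> A"
  obtain S' where S': "(S has_derivative S') (at (y + \<mu> *s v))" "\<forall>c v. S' (c *s v) = c *s S' v"
    using assms z unfolding holo_on_def by blast
  have p: "((\<lambda>\<mu>. y + \<mu> *s v) has_derivative (\<lambda>h. h *s v)) (at \<mu>)"
    using bounded_linear_imp_has_derivative[OF bl_smult, of v "at \<mu>"]
    by (auto intro!: derivative_eq_intros)
  have "((\<lambda>\<mu>. S (y + \<mu> *s v) $ j) has_field_derivative (S' v $ j)) (at \<mu>)"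
    by (rule path_field_deriv[OF S' p])
  then show "(\<lambda>\<mu>. S (y + \<mu> *s v) $ j) field_differentiable at \<mu> within A"
    unfolding field_differentiable_def by (blast intro: has_field_derivative_at_within)
qed

lemma ev_at0:
  assumes "0 < d" "\<And>x::'a::real_normed_vector. x \<noteq> 0 \<Longrightarrow> norm x < d \<Longrightarrow> P x"
  shows "eventually P (at 0)"
  unfolding eventually_at using assms by (auto simp: dist_norm)

definition cf :: "(complex \<Rightarrow> complex) \<Rightarrow> nat \<Rightarrow> complex" where
  "cf f i = (deriv ^^ i) f 0 / fact i"

lemma PS_coef_bound:
  assumes hol: "f holomorphic_on ball 0 R" and bd: "\<forall>z\<in>ball 0 R. norm (f z) \<le> B"
    and s: "0 < s" "s < R"
  shows "norm (cf f i) \<le> B / s^i"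
proof -
  have "norm ((deriv ^^ i) f 0) \<le> fact i * B / s^i"
  proof (rule Cauchy_inequality)
    show "f holomorphic_on ball 0 s" by (rule holomorphic_on_subset[OF hol]) (use s in auto)
    show "continuous_on (cball 0 s) f"
      by (rule continuous_on_subset[OF holomorphic_on_imp_continuous_on[OF hol]]) (use s in auto)
    show "norm (f x) \<le> B" if "norm (0 - x) = s" for x using bd that s by auto
  qed (use s in auto)
  then show ?thesis unfolding cf_def by (simp add: norm_divide field_simps)
qed

lemma PS_tail:
  assumes hol: "f holomorphic_on ball 0 R" and bd: "\<forall>z\<in>ball 0 R. norm (f z) \<le> B"
    and s: "0 < s" "s < R" and z: "norm \<zeta> \<le> s/2"
  shows "norm (f \<zeta> - (\<Sum>i<Suc N. cf f i * \<zeta>^i)) \<le> 2 * B * (norm \<zeta> / s)^(Suc N)"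
proof -
  have zR: "\<zeta> \<in> ball 0 R" using z s by auto
  have B0: "0 \<le> B" using bd[rule_format, of 0] s by (auto intro: order_trans[OF norm_ge_zero])
  have sums: "(\<lambda>n. cf f n * \<zeta>^n) sums f \<zeta>"
    using holomorphic_power_series[OF hol zR] unfolding cf_def by simp
  define q where "q = norm \<zeta> / s"
  have q: "0 \<le> q" "q \<le> 1/2" using z s unfolding q_def by (auto simp: field_simps)
  have tl: "(\<lambda>n. cf f (n + Suc N) * \<zeta>^(n + Suc N)) sums (f \<zeta> - (\<Sum>i<Suc N. cf f i * \<zeta>^i))"
    by (rule sums_split_initial_segment[OF sums])
  have bnd: "norm (cf f (n + Suc N) * \<zeta>^(n + Suc N)) \<le> B * q^(Suc N) * q^n" for n
  proof -
    have "norm (cf f (n + Suc N) * \<zeta>^(n + Suc N)) \<le> B / s^(n + Suc N) * norm \<zeta>^(n + Suc N)"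
      unfolding norm_mult norm_power
      by (intro mult_right_mono PS_coef_bound[OF hol bd s]) auto
    also have "\<dots> = B * q^(Suc N) * q^n" unfolding q_def by (simp add: field_simps power_add power_divide)
    finally show ?thesis .
  qed
  have geo: "(\<lambda>n. B * q^(Suc N) * q^n) sums (B * q^(Suc N) * (1 / (1 - q)))"
    using geometric_sums[of q] q by (intro sums_mult) auto
  have "norm (f \<zeta> - (\<Sum>i<Suc N. cf f i * \<zeta>^i)) \<le> B * q^(Suc N) * (1 / (1 - q))"
  proof -
    have s1: "summable (\<lambda>n. norm (cf f (n + Suc N) * \<zeta>^(n + Suc N)))"
      by (rule summable_comparison_test'[OF sums_summable[OF geo]]) (use bnd in auto)
    have "norm (f \<zeta> - (\<Sum>i<Suc N. cf f i * \<zeta>^i)) = norm (\<Sum>n. cf f (n + Suc N) * \<zeta>^(n + Suc N))"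
      using sums_unique[OF tl] by simp
    also have "\<dots> \<le> (\<Sum>n. norm (cf f (n + Suc N) * \<zeta>^(n + Suc N)))" by (rule summable_norm[OF s1])
    also have "\<dots> \<le> (\<Sum>n. B * q^(Suc N) * q^n)"
      by (rule suminf_le[OF bnd s1 sums_summable[OF geo]])
    also have "\<dots> = B * q^(Suc N) * (1 / (1 - q))" using sums_unique[OF geo] by simp
    finally show ?thesis .
  qed
  also have "\<dots> \<le> B * q^(Suc N) * 2"
    using q B0 by (intro mult_left_mono) (auto simp: field_simps)
  finally show ?thesis unfolding q_def by (simp add: mult_ac)
qed

lemma poly_o:
  fixes b :: "nat \<Rightarrow> complex"
  assumes lim: "((\<lambda>\<zeta>. (\<Sum>i\<le>N. b i * \<zeta>^i) / \<zeta>^N) \<longlongrightarrow> 0) (at 0)"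
  shows "i \<le> N \<Longrightarrow> b i = 0"
proof (induction i rule: less_induct)
  case (less i)
  define P where "P \<zeta> = (\<Sum>l\<in>{i..N}. b l * \<zeta>^(l - i))" for \<zeta> :: complex
  have eq: "(\<Sum>l\<le>N. b l * \<zeta>^l) = \<zeta>^i * P \<zeta>" for \<zeta>
  proof -
    have "(\<Sum>l\<le>N. b l * \<zeta>^l) = (\<Sum>l\<in>{i..N}. b l * \<zeta>^l)"
      using less by (intro sum.mono_neutral_right) auto
    also have "\<dots> = (\<Sum>l\<in>{i..N}. \<zeta>^i * (b l * \<zeta>^(l - i)))"
      by (intro sum.cong refl) (auto simp: power_add[symmetric] mult_ac)
    finally show ?thesis unfolding P_def by (simp add: sum_distrib_left)
  qed
  have "(P \<longlongrightarrow> P 0) (at 0)" unfolding P_def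
    by (intro tendsto_intros continuous_intros)
  moreover have "P 0 = b i"
  proof -
    have "P 0 = (\<Sum>l\<in>{i..N}. if l = i then b l else 0)"
      unfolding P_def by (intro sum.cong refl) auto
    then show ?thesis using less by simp
  qed
  moreover have "(P \<longlongrightarrow> 0) (at 0)"
  proof -
    have "((\<lambda>\<zeta>. (\<Sum>i\<le>N. b i * \<zeta>^i) / \<zeta>^N * \<zeta>^(N - i)) \<longlongrightarrow> 0 * 0^(N-i)) (at 0)"
      by (intro tendsto_intros lim)
    then have "((\<lambda>\<zeta>. (\<Sum>i\<le>N. b i * \<zeta>^i) / \<zeta>^N * \<zeta>^(N - i)) \<longlongrightarrow> 0) (at 0)" by simp
    moreover have "eventually (\<lambda>\<zeta>. (\<Sum>i\<le>N. b i * \<zeta>^i) / \<zeta>^N * \<zeta>^(N - i) = P \<zeta>) (at 0)"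
    proof (rule ev_at0[of 1])
      fix \<zeta> :: complex assume "\<zeta> \<noteq> 0"
      then show "(\<Sum>i\<le>N. b i * \<zeta>^i) / \<zeta>^N * \<zeta>^(N - i) = P \<zeta>"
        using less(2) unfolding eq by (simp add: field_simps power_add[symmetric])
    qed simp
    ultimately show ?thesis by (rule Lim_transform_eventually)
  qed
  ultimately show ?case using tendsto_unique[OF at_neq_bot] by metis
qed

lemma o_coeff:
  assumes hol: "f holomorphic_on ball 0 R" and bd: "\<forall>z\<in>ball 0 R. norm (f z) \<le> B" and R: "0 < R"
    and lim: "((\<lambda>\<zeta>. (f \<zeta> - (\<Sum>i\<le>N. p i * \<zeta>^i)) / \<zeta>^N) \<longlongrightarrow> 0) (at 0)"
    and i: "i \<le> N"
  shows "cf f i = p i"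
proof -
  define s where "s = R/2"
  have s: "0 < s" "s < R" using R unfolding s_def by auto
  have t: "((\<lambda>\<zeta>. (f \<zeta> - (\<Sum>i\<le>N. cf f i * \<zeta>^i)) / \<zeta>^N) \<longlongrightarrow> 0) (at 0)"
  proof (rule Lim_null_comparison)
    show "eventually (\<lambda>\<zeta>. norm ((f \<zeta> - (\<Sum>i\<le>N. cf f i * \<zeta>^i)) / \<zeta>^N) \<le> 2 * B / s^(Suc N) * norm \<zeta>) (at 0)"
    proof (rule ev_at0[of "s/2"])
      fix \<zeta> :: complex assume z0: "\<zeta> \<noteq> 0" and z: "norm \<zeta> < s/2"
      from PS_tail[OF hol bd s, of \<zeta> N] z
      have "norm (f \<zeta> - (\<Sum>i\<le>N. cf f i * \<zeta>^i)) \<le> 2 * B * (norm \<zeta> / s)^(Suc N)"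
        by (simp add: lessThan_Suc_atMost)
      also have "\<dots> = (2 * B / s^(Suc N) * norm \<zeta>) * norm \<zeta> ^ N"
        using s by (simp add: power_divide field_simps)
      finally show "norm ((f \<zeta> - (\<Sum>i\<le>N. cf f i * \<zeta>^i)) / \<zeta>^N) \<le> 2 * B / s^(Suc N) * norm \<zeta>"
        using z0 by (simp add: norm_divide norm_power pos_divide_le_eq)
    qed (use s in auto)
    show "((\<lambda>\<zeta>. 2 * B / s^(Suc N) * norm \<zeta>) \<longlongrightarrow> 0) (at 0)"
      using s by (auto intro!: tendsto_eq_intros)
  qed
  have "((\<lambda>\<zeta>. (\<Sum>i\<le>N. (cf f i - p i) * \<zeta>^i) / \<zeta>^N) \<longlongrightarrow> 0 - 0) (at 0)"
  proof -
    have e: "(\<Sum>i\<le>N. (cf f i - p i) * \<zeta>^i) / \<zeta>^N =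
       (f \<zeta> - (\<Sum>i\<le>N. p i * \<zeta>^i)) / \<zeta>^N - (f \<zeta> - (\<Sum>i\<le>N. cf f i * \<zeta>^i)) / \<zeta>^N" for \<zeta>
      by (simp add: diff_divide_distrib[symmetric] sum_subtractf algebra_simps)
    show ?thesis unfolding e by (intro tendsto_diff lim t)
  qed
  then have "cf f i - p i = 0" using poly_o[of "\<lambda>i. cf f i - p i" N i] i by simp
  then show ?thesis by simp
qed

lemma norm_axis_c: "norm (axis (a0::'n::finite) (\<mu>::complex)) = cmod \<mu>"
proof -
  have "(\<Sum>i\<in>UNIV. (cmod (axis a0 \<mu> $ i))^2) = (\<Sum>i\<in>UNIV. if i = a0 then (cmod \<mu>)^2 else 0)"
    by (intro sum.cong) (auto simp: axis_def)
  then show ?thesis unfolding norm_vec_def L2_set_def by simp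
qed

lemma smult_axis: "\<mu> *s axis a0 1 = axis a0 (\<mu>::complex)"
  by (simp add: vec_eq_iff axis_def)

definition hp :: "'n::finite \<Rightarrow> complex^'n \<Rightarrow> complex^'n" where
  "hp a0 u = (\<chi> j. if j = a0 then 0 else u$j)"

lemma Rm_decomp: "Rm a0 \<zeta> u = \<zeta> *s hp a0 u + axis a0 (\<zeta>^2 * u$a0)"
  by (simp add: vec_eq_iff Rm_def hp_def axis_def wt_def)

lemma Rmd_0: "Rmd a0 0 u = hp a0 u"
  by (simp add: vec_eq_iff Rmd_def hp_def wt_def)

lemma Rm_0: "Rm a0 0 u = 0"
  by (simp add: vec_eq_iff Rm_def wt_def)

lemma hp_a0[simp]: "hp a0 u $ a0 = 0" by (simp add: hp_def)

lemma LL_coord_bound_S: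
  assumes "S ` LL a0 \<subseteq> LL a0" "x \<in> LL a0" shows "cmod (S x $ j) \<le> 1"
  using LL_coord_bound[of "S x" a0 j] assms by auto

lemma dH:
  assumes holo: "holo_on S (LL a0)" and fixH: "\<forall>y\<in>LL a0. y$a0 = 0 \<longrightarrow> S y = y"
    and S': "(S has_derivative S') (at 0)" "\<forall>c v. S' (c *s v) = c *s S' v"
    and v: "v$a0 = 0"
  shows "S' v = v"
proof -
  obtain r where r: "r > 0" "ball 0 r \<subseteq> LL a0"
    using open_LL[of a0] zero_in_LL[of a0] open_contains_ball by blast
  have "S' v $ j = v $ j" for j
  proof -
    have p: "((\<lambda>\<mu>. \<mu> *s v) has_derivative (\<lambda>h. h *s v)) (at 0)"
      by (rule bounded_linear_imp_has_derivative[OF bl_smult])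
    have d1: "((\<lambda>\<mu>. S (\<mu> *s v) $ j) has_field_derivative (S' v $ j)) (at 0)"
      using path_field_deriv[of S S' "\<lambda>\<mu>. \<mu> *s v" 0 v j] S' p by simp
    define A where "A = {\<mu>::complex. \<mu> *s v \<in> ball 0 r}"
    have "open ((\<lambda>\<mu>::complex. \<mu> *s v) -` ball 0 r)"
      by (rule continuous_imp_open_vimage[OF linear_continuous_on[OF bl_smult], of UNIV]) auto
    then have oA: "open A" unfolding A_def vimage_def by simp
    have A0: "0 \<in> A" using r unfolding A_def by simp
    have eqS: "S (\<mu> *s v) $ j = \<mu> * v $ j" if "\<mu> \<in> A" for \<mu>
    proof -
      have "\<mu> *s v \<in> LL a0" using that r unfolding A_def by auto
      then have "S (\<mu> *s v) = \<mu> *s v" using fixH v by auto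
      then show ?thesis by simp
    qed
    have d0: "((\<lambda>\<mu>. \<mu> * v $ j) has_field_derivative (v $ j)) (at 0)"
      by (auto intro!: derivative_eq_intros)
    have d2: "((\<lambda>\<mu>. S (\<mu> *s v) $ j) has_field_derivative (v $ j)) (at 0)"
      by (rule has_field_derivative_transform_within_open[OF d0 oA A0]) (simp add: eqS)
    show ?thesis using DERIV_unique[OF d1 d2] .
  qed
  then show ?thesis by (simp add: vec_eq_iff)
qed

definition alpha :: "'n::finite \<Rightarrow> (complex^'n \<Rightarrow> complex^'n) \<Rightarrow> complex" where
  "alpha a0 S = deriv (\<lambda>\<mu>. S (axis a0 \<mu>) $ a0) 0"

lemma alpha_eq:
  assumes S': "(S has_derivative S') (at 0)" "\<forall>c v. S' (c *s v) = c *s S' v"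
  shows "alpha a0 S = S' (axis a0 1) $ a0"
proof -
  have p: "((\<lambda>\<mu>. \<mu> *s axis a0 (1::complex)) has_derivative (\<lambda>h. h *s axis a0 1)) (at 0)"
    by (rule bounded_linear_imp_has_derivative[OF bl_smult])
  have "((\<lambda>\<mu>. S (\<mu> *s axis a0 1) $ a0) has_field_derivative (S' (axis a0 1) $ a0)) (at 0)"
    using path_field_deriv[of S S' "\<lambda>\<mu>. \<mu> *s axis a0 1" 0 "axis a0 1" a0] S' p by simp
  then show ?thesis unfolding alpha_def smult_axis by (rule DERIV_imp_deriv)
qed

lemma init_other:
  assumes holo: "holo_on S (LL a0)" and fixH: "\<forall>y\<in>LL a0. y$a0 = 0 \<longrightarrow> S y = y"
    and j: "j \<noteq> a0"
  shows "((\<lambda>\<zeta>. (S (Rm a0 \<zeta> u) $ j - \<zeta> * u$j) / \<zeta>) \<longlongrightarrow> 0) (at 0)"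
proof -
  obtain S' where S': "(S has_derivative S') (at 0)" "\<forall>c v. S' (c *s v) = c *s S' v"
    using holo zero_in_LL[of a0] unfolding holo_on_def by blast
  have d: "((\<lambda>\<zeta>. S (Rm a0 \<zeta> u) $ j) has_field_derivative (S' (Rmd a0 0 u) $ j)) (at 0)"
    using path_field_deriv[of S S' "\<lambda>\<zeta>. Rm a0 \<zeta> u" 0 "Rmd a0 0 u" j] S' Rm_path_deriv[of a0 u 0]
    by (simp add: Rm_0)
  have "S' (Rmd a0 0 u) = hp a0 u" unfolding Rmd_0 by (rule dH[OF holo fixH S']) simp
  then have d: "((\<lambda>\<zeta>. S (Rm a0 \<zeta> u) $ j) has_field_derivative (u $ j)) (at 0)"
    using d j by (simp add: hp_def)
  have S0: "S (Rm a0 0 u) $ j = 0" using fixH zero_in_LL[of a0] by (simp add: Rm_0)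
  have "((\<lambda>\<zeta>. (S (Rm a0 \<zeta> u) $ j - 0) / \<zeta>) \<longlongrightarrow> u $ j) (at 0)"
    using d unfolding DERIV_def using S0 by simp
  then have "((\<lambda>\<zeta>. (S (Rm a0 \<zeta> u) $ j - 0) / \<zeta> - u $ j) \<longlongrightarrow> u $ j - u $ j) (at 0)"
    by (intro tendsto_diff) auto
  moreover have "eventually (\<lambda>\<zeta>. (S (Rm a0 \<zeta> u) $ j - 0) / \<zeta> - u $ j = (S (Rm a0 \<zeta> u) $ j - \<zeta> * u$j) / \<zeta>) (at 0)"
    by (rule ev_at0[of 1]) (auto simp: field_simps)
  ultimately show ?thesis using Lim_transform_eventually by fastforce
qed

lemma norm_smult_c: "norm (c *s (v::complex^'n::finite)) = cmod c * norm v"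
proof -
  have "(\<Sum>i\<in>UNIV. (cmod ((c *s v) $ i))^2) = (cmod c)^2 * (\<Sum>i\<in>UNIV. (cmod (v $ i))^2)"
    by (simp add: norm_mult power_mult_distrib sum_distrib_left)
  then show ?thesis unfolding norm_vec_def L2_set_def by (simp add: real_sqrt_mult)
qed

lemma init_a0:
  assumes holo: "holo_on S (LL a0)" and img: "S ` LL a0 \<subseteq> LL a0"
    and fixH: "\<forall>y\<in>LL a0. y$a0 = 0 \<longrightarrow> S y = y"
  shows "((\<lambda>\<zeta>. (S (Rm a0 \<zeta> u) $ a0 - alpha a0 S * \<zeta>^2 * u$a0) / \<zeta>^2) \<longlongrightarrow> 0) (at 0)"
proof -
  obtain r0 where r0: "r0 > 0" "cball 0 r0 \<subseteq> LL a0"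
    using open_LL[of a0] zero_in_LL[of a0] open_contains_cball by blast
  define r where "r = r0 / 3"
  have r: "r > 0" "cball 0 (3*r) \<subseteq> LL a0" using r0 unfolding r_def by auto
  define e1 where "e1 = axis a0 (1::complex)"
  have ne1: "norm (\<mu> *s e1) = cmod \<mu>" for \<mu> unfolding e1_def smult_axis by (rule norm_axis_c)
  define \<phi> where "\<phi> y \<mu> = S (y + \<mu> *s e1) $ a0" for y \<mu>
  have memb: "y + \<mu> *s e1 \<in> cball 0 (3*r)" if "norm y \<le> r" "cmod \<mu> \<le> 2*r" for y \<mu>
  proof -
    have "norm (y + \<mu> *s e1) \<le> norm y + cmod \<mu>" using norm_triangle_ineq[of y "\<mu> *s e1"] ne1 by simp
    then show ?thesis using that by auto
  qed
  have hol: "\<phi> y holomorphic_on ball 0 (2*r)" if "norm y \<le> r" for y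
    unfolding \<phi>_def
    by (rule one_var_holo_line[OF holo]) (use memb r that in auto)
  have bd: "\<forall>\<mu>\<in>ball 0 (2*r). cmod (\<phi> y \<mu>) \<le> 1" if "norm y \<le> r" for y
    unfolding \<phi>_def using memb r that LL_coord_bound_S[OF img] by (meson less_imp_le mem_ball_0 subsetD)
  have \<phi>0: "\<phi> y 0 = 0" if "y$a0 = 0" "norm y \<le> r" for y
  proof -
    have "y \<in> LL a0" using memb[OF that(2), of 0] r by auto
    then show ?thesis unfolding \<phi>_def using fixH that by simp
  qed
  define D where "D y = deriv (\<phi> y) 0" for y
  have est: "cmod (\<phi> y \<mu> - D y * \<mu>) \<le> 2 * (cmod \<mu> / r)^2"
    if "y$a0 = 0" "norm y \<le> r" "cmod \<mu> \<le> r/2" for y \<mu>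
  proof -
    have "cmod (\<phi> y \<mu> - (\<Sum>i<Suc 1. cf (\<phi> y) i * \<mu>^i)) \<le> 2 * 1 * (cmod \<mu> / r)^(Suc 1)"
      by (rule PS_tail[OF hol[OF that(2)] bd[OF that(2)]]) (use r that in auto)
    moreover have "(\<Sum>i<Suc 1. cf (\<phi> y) i * \<mu>^i) = D y * \<mu>"
      using \<phi>0[OF that(1,2)] unfolding cf_def D_def by (simp add: lessThan_Suc)
    ultimately show ?thesis by (simp add: power2_eq_square)
  qed
  have Dcont: "\<exists>\<delta>>0. \<forall>y. y$a0 = 0 \<longrightarrow> norm y < \<delta> \<longrightarrow> cmod (D y - D 0) \<le> \<epsilon>" if eps: "\<epsilon> > 0" for \<epsilon>
  proof -
    have er: "\<epsilon> * r > 0" using eps r by simp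
    have "continuous_on (cball 0 (3*r)) S"
      using continuous_on_subset[OF holo_cont_on[OF holo] r(2)] .
    then have "uniformly_continuous_on (cball 0 (3*r)) S"
      by (intro compact_uniformly_continuous) auto
    then obtain \<delta>0 where \<delta>0: "\<delta>0 > 0"
      "\<forall>x\<in>cball 0 (3*r). \<forall>x'\<in>cball 0 (3*r). dist x' x < \<delta>0 \<longrightarrow> dist (S x') (S x) < \<epsilon> * r"
      unfolding uniformly_continuous_on_def using er by metis
    define \<delta> where "\<delta> = min \<delta>0 r"
    have "\<delta> > 0" using \<delta>0 r unfolding \<delta>_def by auto
    moreover have "cmod (D y - D 0) \<le> \<epsilon>" if y: "y$a0 = 0" "norm y < \<delta>" for y
    proof -
      have ny: "norm y \<le> r" using y unfolding \<delta>_def by auto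
      define \<psi> where "\<psi> \<mu> = \<phi> y \<mu> - \<phi> 0 \<mu>" for \<mu>
      have h\<psi>: "\<psi> holomorphic_on ball 0 (2*r)"
        unfolding \<psi>_def using hol[OF ny] hol[of 0] r by (intro holomorphic_intros) auto
      have "norm ((deriv ^^ 1) \<psi> 0) \<le> fact 1 * (\<epsilon> * r) / r^1"
      proof (rule Cauchy_inequality)
        show "\<psi> holomorphic_on ball 0 r" by (rule holomorphic_on_subset[OF h\<psi>]) (use r in auto)
        show "continuous_on (cball 0 r) \<psi>"
          by (rule continuous_on_subset[OF holomorphic_on_imp_continuous_on[OF h\<psi>]]) (use r in auto)
        show "cmod (\<psi> x) \<le> \<epsilon> * r" if "cmod (0 - x) = r" for x
        proof -
          have m1: "y + x *s e1 \<in> cball 0 (3*r)" using memb[OF ny, of x] that r by auto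
          have m2: "0 + x *s e1 \<in> cball 0 (3*r)" using memb[of 0 x] that r by auto
          have "dist (y + x *s e1) (0 + x *s e1) < \<delta>0" using y unfolding \<delta>_def by (simp add: dist_norm)
          then have "dist (S (y + x *s e1)) (S (0 + x *s e1)) < \<epsilon> * r" using \<delta>0(2) m1 m2 by blast
          then have "norm (S (y + x *s e1) - S (0 + x *s e1)) \<le> \<epsilon> * r" by (simp add: dist_norm)
          moreover have "cmod (\<psi> x) \<le> norm (S (y + x *s e1) - S (0 + x *s e1))"
            unfolding \<psi>_def \<phi>_def using Finite_Cartesian_Product.norm_nth_le[of "S (y + x *s e1) - S (0 + x *s e1)" a0] by simp
          ultimately show ?thesis by linarith
        qed
      qed (use r in auto)
      moreover have "(deriv ^^ 1) \<psi> 0 = D y - D 0"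
      proof -
        have "\<phi> y field_differentiable at 0" "\<phi> 0 field_differentiable at 0"
          using holomorphic_on_imp_differentiable_at[OF hol[OF ny]] holomorphic_on_imp_differentiable_at[OF hol[of 0]] r
          by auto
        then show ?thesis unfolding \<psi>_def D_def by simp
      qed
      ultimately show ?thesis using r by simp
    qed
    ultimately show ?thesis by blast
  qed
  have alpha0: "D 0 = alpha a0 S"
    unfolding D_def \<phi>_def alpha_def e1_def smult_axis by simp
  have DL: "((\<lambda>\<zeta>. D (\<zeta> *s hp a0 u)) \<longlongrightarrow> D 0) (at 0)"
  proof (rule tendstoI)
    fix \<epsilon> :: real assume "\<epsilon> > 0"
    then obtain \<delta> where \<delta>: "\<delta> > 0" "\<forall>y. y$a0 = 0 \<longrightarrow> norm y < \<delta> \<longrightarrow> cmod (D y - D 0) \<le> \<epsilon>/2"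
      using Dcont[of "\<epsilon>/2"] by auto
    show "eventually (\<lambda>\<zeta>. dist (D (\<zeta> *s hp a0 u)) (D 0) < \<epsilon>) (at 0)"
    proof (rule ev_at0[of "\<delta> / (norm (hp a0 u) + 1)"])
      fix \<zeta> :: complex assume z: "cmod \<zeta> < \<delta> / (norm (hp a0 u) + 1)"
      have "cmod \<zeta> * norm (hp a0 u) \<le> cmod \<zeta> * (norm (hp a0 u) + 1)" by (simp add: mult_left_mono)
      also have "\<dots> < \<delta>" using z by (simp add: field_simps add_pos_nonneg)
      finally have "norm (\<zeta> *s hp a0 u) < \<delta>" by (simp add: norm_smult_c)
      then have "cmod (D (\<zeta> *s hp a0 u) - D 0) \<le> \<epsilon>/2" using \<delta>(2) by simp
      then show "dist (D (\<zeta> *s hp a0 u)) (D 0) < \<epsilon>" using \<open>\<epsilon>>0\<close> by (simp add: dist_norm)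
    qed (use \<delta>(1) in \<open>intro divide_pos_pos add_nonneg_pos, auto\<close>)
  qed
  define g where "g \<zeta> = cmod (u$a0) * cmod (D (\<zeta> *s hp a0 u) - D 0) + 2 * (cmod (u$a0))^2 * (cmod \<zeta>)^2 / r^2" for \<zeta>
  show ?thesis
  proof (rule Lim_null_comparison)
    have "(g \<longlongrightarrow> cmod (u$a0) * cmod (D 0 - D 0) + 2 * (cmod (u$a0))^2 * (cmod 0)^2 / r^2) (at 0)"
      unfolding g_def using r by (intro tendsto_intros DL) auto
    then show "(g \<longlongrightarrow> 0) (at 0)" by simp
    define d where "d = min 1 (r / (2 * (norm (hp a0 u) + cmod (u$a0) + 1)))"
    have "norm (hp a0 u) + cmod (u$a0) + 1 > 0" by (simp add: add_nonneg_pos)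
    then have d: "d > 0" using r unfolding d_def by simp
    show "eventually (\<lambda>\<zeta>. cmod ((S (Rm a0 \<zeta> u) $ a0 - alpha a0 S * \<zeta>^2 * u$a0) / \<zeta>^2) \<le> g \<zeta>) (at 0)"
    proof (rule ev_at0[OF d])
      fix \<zeta> :: complex assume z0: "\<zeta> \<noteq> 0" and z: "cmod \<zeta> < d"
      define y where "y = \<zeta> *s hp a0 u"
      define \<mu> where "\<mu> = \<zeta>^2 * u$a0"
      have z1: "cmod \<zeta> \<le> 1" using z unfolding d_def by auto
      have zr: "cmod \<zeta> * (norm (hp a0 u) + cmod (u$a0) + 1) \<le> r/2"
        using z unfolding d_def by (simp add: field_simps add_pos_nonneg)
      have ya0: "y$a0 = 0" unfolding y_def by simp
      have m1: "cmod \<zeta> * norm (hp a0 u) \<le> cmod \<zeta> * (norm (hp a0 u) + cmod (u$a0) + 1)"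
        by (intro mult_left_mono) auto
      have m2: "cmod \<zeta> * cmod (u$a0) \<le> cmod \<zeta> * (norm (hp a0 u) + cmod (u$a0) + 1)"
        by (intro mult_left_mono) auto
      have ny: "norm y \<le> r" unfolding y_def norm_smult_c
        using zr r m1 by linarith
      have nmu: "cmod \<mu> \<le> r/2"
      proof -
        have "cmod \<mu> = cmod \<zeta> * (cmod \<zeta> * cmod (u$a0))" unfolding \<mu>_def by (simp add: norm_mult norm_power power2_eq_square)
        also have "\<dots> \<le> 1 * (cmod \<zeta> * cmod (u$a0))" using z1 by (intro mult_right_mono) auto
        also have "\<dots> \<le> r/2" using zr m2 by linarith
        finally show ?thesis .
      qed
      have SR: "S (Rm a0 \<zeta> u) $ a0 = \<phi> y \<mu>"
        unfolding \<phi>_def y_def \<mu>_def e1_def smult_axis Rm_decomp ..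
      have "cmod (\<phi> y \<mu> - alpha a0 S * \<mu>) \<le> cmod (\<phi> y \<mu> - D y * \<mu>) + cmod ((D y - D 0) * \<mu>)"
        unfolding alpha0[symmetric] by (rule order_trans[OF _ norm_triangle_ineq]) (simp add: algebra_simps)
      also have "\<dots> \<le> 2 * (cmod \<mu> / r)^2 + cmod (D y - D 0) * cmod \<mu>"
        using est[OF ya0 ny nmu] by (simp add: norm_mult)
      finally have A: "cmod (\<phi> y \<mu> - alpha a0 S * \<mu>) \<le> 2 * (cmod \<mu> / r)^2 + cmod (D y - D 0) * cmod \<mu>" .
      have "cmod ((S (Rm a0 \<zeta> u) $ a0 - alpha a0 S * \<zeta>^2 * u$a0) / \<zeta>^2) = cmod (\<phi> y \<mu> - alpha a0 S * \<mu>) / (cmod \<zeta>)^2"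
        unfolding SR \<mu>_def by (simp add: norm_divide norm_power mult.assoc)
      also have "\<dots> \<le> (2 * (cmod \<mu> / r)^2 + cmod (D y - D 0) * cmod \<mu>) / (cmod \<zeta>)^2"
        using A by (simp add: divide_right_mono)
      also have "\<dots> = g \<zeta>"
        unfolding g_def y_def[symmetric] \<mu>_def using z0
        by (simp add: norm_mult norm_power field_simps)
      finally show "cmod ((S (Rm a0 \<zeta> u) $ a0 - alpha a0 S * \<zeta>^2 * u$a0) / \<zeta>^2) \<le> g \<zeta>" .
    qed
  qed
qed

lemma sum_two_delta:
  fixes x y \<zeta> :: complex
  assumes "a < b"
  shows "(\<Sum>i\<le>b. (if i = a then x else if i = b then y else 0) * \<zeta>^i) = x * \<zeta>^a + y * \<zeta>^b"
proof -
  have "(\<Sum>i\<le>b. (if i = a then x else if i = b then y else 0) * \<zeta>^i)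
      = (\<Sum>i\<le>b. (if i = a then x * \<zeta>^a else 0) + (if i = b then y * \<zeta>^b else 0))"
    using assms by (intro sum.cong) auto
  also have "\<dots> = x * \<zeta>^a + y * \<zeta>^b" using assms by (simp add: sum.distrib)
  finally show ?thesis .
qed

lemma sum_one_delta:
  fixes x \<zeta> :: complex
  shows "(\<Sum>i\<le>b. (if i = b then x else 0) * \<zeta>^i) = x * \<zeta>^b"
proof -
  have "(\<Sum>i\<le>b. (if i = b then x else 0) * \<zeta>^i) = (\<Sum>i\<le>b. (if i = b then x * \<zeta>^b else 0))"
    by (intro sum.cong) auto
  then show ?thesis by simp
qed

locale wc =
  fixes a0 :: "'n::finite" and S :: "complex^'n \<Rightarrow> complex^'n"
  assumes holo: "holo_on S (LL a0)" and img: "S ` LL a0 \<subseteq> LL a0"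
    and init: "\<And>u j. u \<in> LL a0 \<Longrightarrow>
       ((\<lambda>\<zeta>. (S (Rm a0 \<zeta> u) $ j - \<zeta>^(wt a0 j) * u$j) / \<zeta>^(wt a0 j)) \<longlongrightarrow> 0) (at 0)"
begin

definition g where "g u j \<zeta> = S (Rm a0 \<zeta> u) $ j"
definition E where "E u j m = cf (g u j) (m + wt a0 j)"

lemma g_holo: "u \<in> LL a0 \<Longrightarrow> g u j holomorphic_on ball 0 1"
  unfolding g_def by (rule one_var_holo[OF holo]) (auto intro: Rm_in_LL)

lemma g_bd: "u \<in> LL a0 \<Longrightarrow> \<forall>\<zeta>\<in>ball 0 1. cmod (g u j \<zeta>) \<le> 1"
proof
  fix \<zeta> :: complex assume "u \<in> LL a0" "\<zeta> \<in> ball 0 1"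
  then have "Rm a0 \<zeta> u \<in> LL a0" by (intro Rm_in_LL) auto
  then show "cmod (g u j \<zeta>) \<le> 1" unfolding g_def by (rule LL_coord_bound_S[OF img])
qed

lemma cf_init:
  assumes u: "u \<in> LL a0" and i: "i \<le> wt a0 j"
  shows "cf (g u j) i = (if i = wt a0 j then u$j else 0)"
proof (rule o_coeff[OF g_holo[OF u] g_bd[OF u] _ _ i])
  show "((\<lambda>\<zeta>. (g u j \<zeta> - (\<Sum>i\<le>wt a0 j. (if i = wt a0 j then u$j else 0) * \<zeta>^i)) / \<zeta>^(wt a0 j)) \<longlongrightarrow> 0) (at 0)"
    unfolding sum_one_delta g_def using init[OF u, of j] by (simp add: mult.commute)
qed simp

lemma caseA:
  assumes A: "\<And>u j m. u \<in> LL a0 \<Longrightarrow> 1 \<le> m \<Longrightarrow> E u j m = 0" and w: "w \<in> LL a0"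
  shows "S w = w"
proof -
  obtain \<rho> where \<rho>: "\<rho> > 1" "\<forall>c. cmod c < \<rho> \<longrightarrow> Rm a0 c w \<in> LL a0"
    using LL_ext[OF w] by blast
  have "S w $ j = w $ j" for j
  proof -
    have hol: "g w j holomorphic_on ball 0 \<rho>"
      unfolding g_def by (rule one_var_holo[OF holo]) (use \<rho> in auto)
    have "(\<lambda>n. cf (g w j) n * (1 - 0)^n) sums g w j 1"
      using holomorphic_power_series[OF hol, of 1] \<rho> unfolding cf_def by simp
    moreover have "cf (g w j) n = (if n = wt a0 j then w$j else 0)" for n
    proof (cases "n \<le> wt a0 j")
      case True then show ?thesis using cf_init[OF w True] by simp
    next
      case False
      define m where "m = n - wt a0 j"
      have m: "n = m + wt a0 j" "1 \<le> m" using False unfolding m_def by auto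
      then show ?thesis using A[OF w m(2), of j] False unfolding E_def by simp
    qed
    ultimately have "(\<lambda>n. if n = wt a0 j then w$j else 0) sums g w j 1" by simp
    moreover have "(\<lambda>n. if n = wt a0 j then w$j else 0) sums w$j" using sums_single[of "wt a0 j" "\<lambda>_. w$j"] by simp
    ultimately have "g w j 1 = w$j" using sums_unique2 by blast
    then show ?thesis unfolding g_def by simp
  qed
  then show ?thesis by (simp add: vec_eq_iff)
qed

context
  fixes d :: nat
  assumes d1: "1 \<le> d"
    and low: "\<And>u j m. u \<in> LL a0 \<Longrightarrow> 1 \<le> m \<Longrightarrow> m < d \<Longrightarrow> E u j m = 0"
begin

lemma cf_low:
  assumes u: "u \<in> LL a0" and i: "i \<le> d + wt a0 j"
  shows "cf (g u j) i = (if i = wt a0 j then u$j else if i = d + wt a0 j then E u j d else 0)"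
proof (cases "i \<le> wt a0 j")
  case True then show ?thesis using cf_init[OF u True] d1 by simp
next
  case False
  define m where "m = i - wt a0 j"
  have m: "i = m + wt a0 j" "1 \<le> m" using False unfolding m_def by auto
  show ?thesis
  proof (cases "m < d")
    case True then show ?thesis using low[OF u m(2) True, of j] m unfolding E_def by auto
  next
    case False then have "m = d" using m i by auto
    then show ?thesis using m unfolding E_def by auto
  qed
qed

lemma UE:
  assumes u: "u \<in> LL a0" and z: "cmod \<zeta> \<le> 1/4"
  shows "cmod (g u j \<zeta> - \<zeta>^(wt a0 j) * u$j - \<zeta>^(d + wt a0 j) * E u j d) \<le> 2 * (2 * cmod \<zeta>)^(Suc (d + wt a0 j))"
proof -
  have "cmod (g u j \<zeta> - (\<Sum>i<Suc (d + wt a0 j). cf (g u j) i * \<zeta>^i)) \<le> 2 * 1 * (cmod \<zeta> / (1/2))^(Suc (d + wt a0 j))"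
    by (rule PS_tail[OF g_holo[OF u] g_bd[OF u]]) (use z in auto)
  moreover have "(\<Sum>i<Suc (d + wt a0 j). cf (g u j) i * \<zeta>^i) = \<zeta>^(wt a0 j) * u$j + \<zeta>^(d + wt a0 j) * E u j d"
  proof -
    have "(\<Sum>i<Suc (d + wt a0 j). cf (g u j) i * \<zeta>^i)
       = (\<Sum>i\<le>d + wt a0 j. (if i = wt a0 j then u$j else if i = d + wt a0 j then E u j d else 0) * \<zeta>^i)"
      unfolding lessThan_Suc_atMost by (intro sum.cong refl) (simp add: cf_low[OF u])
    also have "\<dots> = u$j * \<zeta>^(wt a0 j) + E u j d * \<zeta>^(d + wt a0 j)"
      by (rule sum_two_delta) (use d1 in auto)
    finally show ?thesis by (simp add: mult.commute)
  qed
  then have "g u j \<zeta> - \<zeta>^(wt a0 j) * u$j - \<zeta>^(d + wt a0 j) * E u j d = g u j \<zeta> - (\<Sum>i<Suc (d + wt a0 j). cf (g u j) i * \<zeta>^i)"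
    by (simp add: diff_diff_eq)
  moreover have "cmod \<zeta> / (1/2) = 2 * cmod \<zeta>" by simp
  ultimately show ?thesis by (metis mult_1_right)
qed

lemma E_cont:
  assumes w: "w \<in> LL a0" and e: "\<epsilon> > 0"
  shows "\<exists>\<delta>>0. \<forall>u\<in>LL a0. dist u w < \<delta> \<longrightarrow> cmod (E u j d - E w j d) < \<epsilon>"
proof -
  define N where "N = d + wt a0 j"
  define t :: real where "t = min (1/4) (\<epsilon> / (3 * 2^(N+2)))"
  have t12: "t > 0" "t \<le> 1/4" using e unfolding t_def by auto
  have "t \<le> \<epsilon> / (3 * 2^(N+2))" unfolding t_def by simp
  then have "2^(N+2) * t \<le> 2^(N+2) * (\<epsilon> / (3 * 2^(N+2)))" by (intro mult_left_mono) auto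
  also have "\<dots> = \<epsilon>/3" by simp
  finally have t: "t > 0" "t \<le> 1/4" "2^(N+2) * t \<le> \<epsilon>/3" using t12 by auto
  define \<zeta>0 :: complex where "\<zeta>0 = of_real t"
  have z0: "cmod \<zeta>0 = t" "\<zeta>0 \<noteq> 0" using t unfolding \<zeta>0_def by auto
  define h where "h u = (g u j \<zeta>0 - \<zeta>0^(wt a0 j) * u$j) / \<zeta>0^N" for u
  have hE: "cmod (h u - E u j d) \<le> \<epsilon>/3" if u: "u \<in> LL a0" for u
  proof -
    have zN: "\<zeta>0^N \<noteq> 0" using z0 by simp
    have "h u - E u j d = (g u j \<zeta>0 - \<zeta>0^(wt a0 j) * u$j - \<zeta>0^N * E u j d) / \<zeta>0^N"
      unfolding h_def using zN by (simp add: diff_divide_distrib)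
    then have "cmod (h u - E u j d) = cmod (g u j \<zeta>0 - \<zeta>0^(wt a0 j) * u$j - \<zeta>0^N * E u j d) / t^N"
      using z0 by (simp add: norm_divide norm_power)
    also have "\<dots> \<le> 2 * (2 * t)^(Suc N) / t^N"
      using UE[OF u, of \<zeta>0 j] z0 t unfolding N_def by (intro divide_right_mono) auto
    also have "\<dots> = 2^(N+2) * t"
    proof -
      have "(2*t)^(Suc N) = 2^(Suc N) * t * t^N" by (simp add: power_mult_distrib mult_ac)
      then show ?thesis using t by simp
    qed
    also have "\<dots> \<le> \<epsilon>/3" by (rule t(3))
    finally show ?thesis .
  qed
  have cont: "isCont h w"
  proof -
    have "isCont (\<lambda>u. S (Rm a0 \<zeta>0 u)) w"
      by (rule isCont_o2[OF linear_continuous_at[OF bl_Rm] holo_cont[OF holo]])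
         (use w z0 t in \<open>auto intro: Rm_in_LL\<close>)
    then show ?thesis unfolding h_def g_def using z0 by (intro continuous_intros) auto
  qed
  have e3: "\<epsilon>/3 > 0" using e by simp
  obtain \<delta> where \<delta>: "\<delta> > 0" "\<forall>u. dist u w < \<delta> \<longrightarrow> dist (h u) (h w) < \<epsilon>/3"
    using cont[unfolded continuous_at_eps_delta, rule_format, OF e3] by blast
  have *: "cmod (E u j d - E w j d) < \<epsilon>" if u: "u \<in> LL a0" "dist u w < \<delta>" for u
  proof -
    have eq: "E u j d - E w j d = ((h u - h w) - (h u - E u j d)) + (h w - E w j d)" by simp
    have "cmod (E u j d - E w j d) \<le> cmod ((h u - h w) - (h u - E u j d)) + cmod (h w - E w j d)"
      unfolding eq by (rule norm_triangle_ineq)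
    moreover have "cmod ((h u - h w) - (h u - E u j d)) \<le> cmod (h u - h w) + cmod (h u - E u j d)"
      by (rule norm_triangle_ineq4)
    ultimately have "cmod (E u j d - E w j d) \<le> cmod (h u - E u j d) + cmod (h u - h w) + cmod (h w - E w j d)"
      by linarith
    also have "\<dots> < \<epsilon>/3 + \<epsilon>/3 + \<epsilon>/3"
    proof -
      have "cmod (h u - h w) < \<epsilon>/3" using \<delta>(2) u(2) by (simp add: dist_norm)
      moreover have "cmod (h w - E w j d) \<le> \<epsilon>/3" using hE[OF w] .
      moreover have "cmod (h u - E u j d) \<le> \<epsilon>/3" using hE[OF u(1)] .
      ultimately show ?thesis by linarith
    qed
    finally show ?thesis by simp
  qed
  show ?thesis
  proof (intro exI[of _ \<delta>] conjI ballI impI)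
    show "\<delta> > 0" by (rule \<delta>(1))
    fix u assume "u \<in> LL a0" "dist u w < \<delta>"
    then show "cmod (E u j d - E w j d) < \<epsilon>" by (rule *)
  qed
qed

end
end

lemma alg_split:
  fixes A B V e e' z :: complex and k :: nat
  assumes "z \<noteq> 0"
  shows "(A - B - of_nat (Suc k) * z * e) / z = (A - V - z * e') / z + (V - B - of_nat k * z * e) / z + (e' - e)"
  using assms by (simp add: field_simps)

lemma alg2:
  fixes a b w v E :: complex and k :: nat
  assumes "a \<noteq> 0" "b \<noteq> 0"
  shows "w + of_nat k * a * E + a * ((v - b * w - of_nat k * (a * b) * E) / (a * b)) = inverse b * v"
  using assms by (simp add: field_simps)

context wc begin

context
  fixes d :: nat
  assumes d1: "1 \<le> d"
    and low: "\<And>u j m. u \<in> LL a0 \<Longrightarrow> 1 \<le> m \<Longrightarrow> m < d \<Longrightarrow> E u j m = 0"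
begin

lemma iter:
  assumes w: "w \<in> LL a0"
  shows "((\<lambda>\<zeta>. ((S^^k) (Rm a0 \<zeta> w) $ j - \<zeta>^(wt a0 j) * w$j - of_nat k * \<zeta>^(d + wt a0 j) * E w j d) / \<zeta>^(d + wt a0 j)) \<longlongrightarrow> 0) (at 0)"
proof (induction k arbitrary: j)
  case 0
  then show ?case by (simp add: Rm_nth)
next
  case (Suc k)
  define v where "v \<zeta> = (S^^k) (Rm a0 \<zeta> w)" for \<zeta>
  define uu where "uu \<zeta> = Rm a0 (inverse \<zeta>) (v \<zeta>)" for \<zeta>
  define Q where "Q i \<zeta> = (v \<zeta> $ i - \<zeta>^(wt a0 i) * w$i - of_nat k * \<zeta>^(d + wt a0 i) * E w i d) / \<zeta>^(d + wt a0 i)" for i \<zeta>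
  have Q: "(Q i \<longlongrightarrow> 0) (at 0)" for i unfolding Q_def v_def by (rule Suc.IH)
  have ulim: "(uu \<longlongrightarrow> w) (at 0)"
  proof (rule vec_tendstoI)
    fix i
    have "((\<lambda>\<zeta>. w$i + of_nat k * \<zeta>^d * E w i d + \<zeta>^d * Q i \<zeta>) \<longlongrightarrow> w$i + of_nat k * 0^d * E w i d + 0^d * 0) (at 0)"
      by (intro tendsto_intros Q)
    moreover have "(0::complex)^d = 0" using d1 by simp
    ultimately have l: "((\<lambda>\<zeta>. w$i + of_nat k * \<zeta>^d * E w i d + \<zeta>^d * Q i \<zeta>) \<longlongrightarrow> w$i) (at 0)"
      by simp
    have "eventually (\<lambda>\<zeta>. w$i + of_nat k * \<zeta>^d * E w i d + \<zeta>^d * Q i \<zeta> = uu \<zeta> $ i) (at 0)"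
    proof (rule ev_at0[of 1])
      fix \<zeta> :: complex assume z: "\<zeta> \<noteq> 0"
      show "w$i + of_nat k * \<zeta>^d * E w i d + \<zeta>^d * Q i \<zeta> = uu \<zeta> $ i"
        unfolding Q_def uu_def Rm_nth power_add power_inverse
        by (rule alg2) (use z in simp_all)
    qed simp
    then show "((\<lambda>\<zeta>. uu \<zeta> $ i) \<longlongrightarrow> w $ i) (at 0)" by (rule Lim_transform_eventually[OF l])
  qed
  have evLL: "eventually (\<lambda>\<zeta>. uu \<zeta> \<in> LL a0) (at 0)"
    using ulim open_LL[of a0] w unfolding tendsto_def by blast
  have Elim: "((\<lambda>\<zeta>. E (uu \<zeta>) j d) \<longlongrightarrow> E w j d) (at 0)"
  proof (rule tendstoI)
    fix \<epsilon> :: real assume e: "\<epsilon> > 0"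
    obtain \<delta> where \<delta>: "\<delta> > 0" "\<forall>u\<in>LL a0. dist u w < \<delta> \<longrightarrow> cmod (E u j d - E w j d) < \<epsilon>"
      using E_cont[OF d1 low w e, of j] by blast
    have "eventually (\<lambda>\<zeta>. dist (uu \<zeta>) w < \<delta>) (at 0)" using ulim \<delta>(1) by (rule tendstoD)
    with evLL show "eventually (\<lambda>\<zeta>. dist (E (uu \<zeta>) j d) (E w j d) < \<epsilon>) (at 0)"
    proof eventually_elim
      case (elim \<zeta>) then show ?case using \<delta>(2) by (simp add: dist_norm)
    qed
  qed
  define N where "N = d + wt a0 j"
  define T1 where "T1 \<zeta> = ((S^^Suc k) (Rm a0 \<zeta> w) $ j - v \<zeta> $ j - \<zeta>^N * E (uu \<zeta>) j d) / \<zeta>^N" for \<zeta>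
  have T1: "(T1 \<longlongrightarrow> 0) (at 0)"
  proof (rule Lim_null_comparison)
    show "((\<lambda>\<zeta>. 2^(N+2) * cmod \<zeta>) \<longlongrightarrow> 0) (at 0)" by (auto intro!: tendsto_eq_intros)
    have ev4: "eventually (\<lambda>\<zeta>. \<zeta> \<noteq> 0 \<and> cmod \<zeta> \<le> 1/4) (at 0)"
      by (rule ev_at0[of "1/4"]) auto
    from evLL ev4 show "eventually (\<lambda>\<zeta>. norm (T1 \<zeta>) \<le> 2^(N+2) * cmod \<zeta>) (at 0)"
    proof eventually_elim
      case (elim \<zeta>)
      then have z: "\<zeta> \<noteq> 0" "cmod \<zeta> \<le> 1/4" "uu \<zeta> \<in> LL a0" by auto
      have RR: "Rm a0 \<zeta> (uu \<zeta>) = v \<zeta>" unfolding uu_def by (rule Rm_inv[OF z(1)])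
      have A: "(S^^Suc k) (Rm a0 \<zeta> w) $ j = g (uu \<zeta>) j \<zeta>" unfolding g_def RR v_def by simp
      have B: "v \<zeta> $ j = \<zeta>^(wt a0 j) * uu \<zeta> $ j"
        unfolding RR[symmetric] by (simp add: Rm_nth)
      have "cmod ((S^^Suc k) (Rm a0 \<zeta> w) $ j - v \<zeta> $ j - \<zeta>^N * E (uu \<zeta>) j d) \<le> 2 * (2 * cmod \<zeta>)^(Suc N)"
        unfolding A B N_def by (rule UE[OF d1 low z(3) z(2)])
      also have "\<dots> = 2^(N+2) * cmod \<zeta> * cmod \<zeta> ^ N"
        by (simp add: power_mult_distrib mult_ac)
      finally show ?case unfolding T1_def using z(1)
        by (simp add: norm_divide norm_power pos_divide_le_eq)
    qed
  qed
  have lim3: "((\<lambda>\<zeta>. T1 \<zeta> + Q j \<zeta> + (E (uu \<zeta>) j d - E w j d)) \<longlongrightarrow> 0 + 0 + (E w j d - E w j d)) (at 0)"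
    by (intro tendsto_intros T1 Q Elim)
  have "eventually (\<lambda>\<zeta>. T1 \<zeta> + Q j \<zeta> + (E (uu \<zeta>) j d - E w j d) =
     ((S^^Suc k) (Rm a0 \<zeta> w) $ j - \<zeta>^(wt a0 j) * w$j - of_nat (Suc k) * \<zeta>^(d + wt a0 j) * E w j d) / \<zeta>^(d + wt a0 j)) (at 0)"
  proof (rule ev_at0[of 1])
    fix \<zeta> :: complex assume z: "\<zeta> \<noteq> 0"
    show "T1 \<zeta> + Q j \<zeta> + (E (uu \<zeta>) j d - E w j d) =
     ((S^^Suc k) (Rm a0 \<zeta> w) $ j - \<zeta>^(wt a0 j) * w$j - of_nat (Suc k) * \<zeta>^(d + wt a0 j) * E w j d) / \<zeta>^(d + wt a0 j)"
      unfolding T1_def Q_def N_def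
      by (rule alg_split[symmetric]) (use z in simp)
  qed simp
  then show ?case using Lim_transform_eventually[OF lim3] by simp
qed

lemma E_zero:
  assumes w: "w \<in> LL a0"
  shows "E w j d = 0"
proof -
  define N where "N = d + wt a0 j"
  have bound: "of_nat k * cmod (E w j d) \<le> 2^N" for k
  proof -
    define gk where "gk \<zeta> = (S^^k) (Rm a0 \<zeta> w) $ j" for \<zeta>
    have hk: "holo_on (S^^k) (LL a0)" "(S^^k) ` LL a0 \<subseteq> LL a0"
      using holo_on_iter[OF holo img, of k] by auto
    have hol: "gk holomorphic_on ball 0 1"
      unfolding gk_def by (rule one_var_holo[OF hk(1)]) (auto intro: Rm_in_LL[OF w])
    have bd: "\<forall>\<zeta>\<in>ball 0 1. cmod (gk \<zeta>) \<le> 1"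
    proof
      fix \<zeta> :: complex assume "\<zeta> \<in> ball 0 1"
      then have "Rm a0 \<zeta> w \<in> LL a0" by (intro Rm_in_LL[OF w]) auto
      then show "cmod (gk \<zeta>) \<le> 1" unfolding gk_def by (rule LL_coord_bound_S[OF hk(2)])
    qed
    have "cf gk N = (if N = wt a0 j then w$j else if N = N then of_nat k * E w j d else 0)"
    proof (rule o_coeff[OF hol bd, of "\<lambda>i. if i = wt a0 j then w$j else if i = N then of_nat k * E w j d else 0" N N])
      have wN: "wt a0 j < N" using d1 unfolding N_def by simp
      show "((\<lambda>\<zeta>. (gk \<zeta> - (\<Sum>i\<le>N. (if i = wt a0 j then w$j else if i = N then of_nat k * E w j d else 0) * \<zeta>^i)) / \<zeta>^N) \<longlongrightarrow> 0) (at 0)"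
        apply (subst sum_two_delta[OF wN])
        using iter[OF w, of k j] unfolding gk_def N_def by (simp add: algebra_simps)
    qed auto
    then have "cf gk N = of_nat k * E w j d" using d1 unfolding N_def by simp
    moreover have "cmod (cf gk N) \<le> 1 / (1/2)^N"
      by (rule PS_coef_bound[OF hol bd]) auto
    ultimately show ?thesis by (simp add: norm_mult power_one_over)
  qed
  show ?thesis
  proof (rule ccontr)
    assume "E w j d \<noteq> 0"
    then have "cmod (E w j d) > 0" by simp
    then obtain k :: nat where "2^N < of_nat k * cmod (E w j d)" using ex_less_of_nat_mult by blast
    then show False using bound[of k] by simp
  qed
qed

end

theorem wc_id:
  assumes w: "w \<in> LL a0"
  shows "S w = w"
proof (cases "\<exists>m u j. 1 \<le> m \<and> u \<in> LL a0 \<and> E u j m \<noteq> 0")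
  case False
  then show ?thesis using caseA[OF _ w] by blast
next
  case True
  define d where "d = (LEAST m. \<exists>u j. 1 \<le> m \<and> u \<in> LL a0 \<and> E u j m \<noteq> 0)"
  have dP: "\<exists>u j. 1 \<le> d \<and> u \<in> LL a0 \<and> E u j d \<noteq> 0"
    unfolding d_def using True by (rule LeastI_ex)
  then have d1: "1 \<le> d" by blast
  have low: "E u j m = 0" if "u \<in> LL a0" "1 \<le> m" "m < d" for u j m
    using not_less_Least[of m "\<lambda>m. \<exists>u j. 1 \<le> m \<and> u \<in> LL a0 \<and> E u j m \<noteq> 0"] that unfolding d_def by blast
  from dP obtain u j where "u \<in> LL a0" "E u j d \<noteq> 0" by blast
  then show ?thesis using E_zero[OF d1 low] by blast
qed

end

lemma root_neg1: "k > 0 \<Longrightarrow> \<exists>c::complex. cmod c = 1 \<and> c^k = -1"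
proof -
  assume k: "k > 0"
  define c where "c = exp (\<i> * of_real (pi / real k))"
  have "cmod c = 1" unfolding c_def by (simp add: norm_exp_i_times)
  moreover have "c^k = exp (of_nat k * (\<i> * of_real (pi / real k)))"
    unfolding c_def by (rule exp_of_nat_mult[symmetric])
  moreover have "of_nat k * (\<i> * of_real (pi / real k)) = \<i> * of_real pi"
    using k by (simp add: field_simps)
  ultimately show ?thesis by auto
qed

lemma rot_final:
  fixes f :: "complex \<Rightarrow> complex"
  assumes hol: "f holomorphic_on ball 0 \<rho>" and \<rho>: "\<rho> > 1"
    and rot: "\<And>c \<zeta>. cmod c = 1 \<Longrightarrow> \<zeta> \<in> ball 0 \<rho> \<Longrightarrow> f (c * \<zeta>) = c^m * f \<zeta>"
    and lim: "((\<lambda>\<zeta>. (f \<zeta> - \<zeta>^m * v) / \<zeta>^m) \<longlongrightarrow> 0) (at 0)"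
  shows "f 1 = v"
proof -
  have B: "open (ball (0::complex) \<rho>)" "(0::complex) \<in> ball 0 \<rho>" using \<rho> by auto
  have cz: "(deriv ^^ n) f 0 = 0" if nm: "n \<noteq> m" for n
  proof -
    have "\<exists>c::complex. cmod c = 1 \<and> c^n \<noteq> c^m"
    proof (cases "n < m")
      case True
      obtain c :: complex where c: "cmod c = 1" "c^(m - n) = -1" using root_neg1[of "m - n"] True by auto
      have "c^m = c^n * c^(m-n)" using True by (simp add: power_add[symmetric])
      then have "c^m = -(c^n)" using c by simp
      moreover have "c^n \<noteq> 0" using c by auto
      ultimately show ?thesis using c by (intro exI[of _ c]) auto
    next
      case False
      obtain c :: complex where c: "cmod c = 1" "c^(n - m) = -1" using root_neg1[of "n - m"] False nm by auto
      have "c^n = c^m * c^(n-m)" using False by (simp add: power_add[symmetric])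
      then have "c^n = -(c^m)" using c by simp
      moreover have "c^m \<noteq> 0" using c by auto
      ultimately show ?thesis using c by (intro exI[of _ c]) auto
    qed
    then obtain c :: complex where c: "cmod c = 1" "c^n \<noteq> c^m" by blast
    have inb: "c * w \<in> ball 0 \<rho>" if "w \<in> ball 0 \<rho>" for w
      using that c by (simp add: norm_mult)
    have "(deriv ^^ n) (\<lambda>w. f (c * w)) 0 = c^n * (deriv ^^ n) f (c * 0)"
      by (rule higher_deriv_compose_linear[OF hol B(1) B(1) B(2) inb])
    moreover have "(deriv ^^ n) (\<lambda>w. f (c * w)) 0 = (deriv ^^ n) (\<lambda>w. c^m * f w) 0"
    proof (rule higher_deriv_cong_ev)
      show "eventually (\<lambda>x. f (c * x) = c^m * f x) (nhds 0)"
        using eventually_nhds_in_open[OF B] by (rule eventually_mono) (use rot c in auto)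
    qed simp
    moreover have "(deriv ^^ n) (\<lambda>w. c^m * f w) 0 = c^m * (deriv ^^ n) f 0"
      by (rule higher_deriv_cmult[OF hol B(2) B(1)])
    ultimately have "(c^n - c^m) * (deriv ^^ n) f 0 = 0" by (simp add: algebra_simps)
    then show ?thesis using c by simp
  qed
  have hol1: "f holomorphic_on ball 0 1" by (rule holomorphic_on_subset[OF hol]) (use \<rho> in auto)
  have cb: "compact (cball (0::complex) 1)" by simp
  have sub: "cball (0::complex) 1 \<subseteq> ball 0 \<rho>" using \<rho> by (simp add: cball_subset_ball_iff)
  have cont: "continuous_on (cball 0 1) f"
    by (rule continuous_on_subset[OF holomorphic_on_imp_continuous_on[OF hol] sub])
  have "bounded (f ` cball 0 1)" by (rule compact_imp_bounded[OF compact_continuous_image[OF cont cb]])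
  then obtain B where "\<forall>x\<in>f ` cball 0 1. norm x \<le> B" unfolding bounded_iff by blast
  then have bdB: "\<forall>z\<in>ball 0 1. cmod (f z) \<le> B" by auto
  have lim': "((\<lambda>\<zeta>. (f \<zeta> - (\<Sum>i\<le>m. (if i = m then v else 0) * \<zeta>^i)) / \<zeta>^m) \<longlongrightarrow> 0) (at 0)"
    unfolding sum_one_delta using lim by (simp add: mult.commute)
  have cm: "cf f m = (if m = m then v else 0)"
    by (rule o_coeff[OF hol1 bdB _ lim']) auto
  have "(\<lambda>n. cf f n * (1 - 0)^n) sums f 1"
    using holomorphic_power_series[OF hol, of 1] \<rho> unfolding cf_def by simp
  moreover have "cf f n * (1 - 0)^n = (if n = m then v else 0)" for n
    using cz[of n] cm unfolding cf_def by auto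
  ultimately have "(\<lambda>n. if n = m then v else 0) sums f 1" by simp
  moreover have "(\<lambda>n. if n = m then v else 0) sums v" using sums_single[of m "\<lambda>_. v"] by simp
  ultimately show ?thesis using sums_unique2 by blast
qed

lemma lin_add: "bounded_linear f \<Longrightarrow> f (x + y) = f x + f y"
  by (rule linear_add[OF bounded_linear.linear])

lemma Gf_axis: "Gf a0 (axis a0 \<mu>) = cmod \<mu>"
proof -
  have "Nf a0 (axis a0 \<mu>) = cmod \<mu>" unfolding Nf_def by (simp add: axis_def)
  moreover have "Qf a0 (axis a0 \<mu>) = cmod \<mu>" unfolding Qf_def by (simp add: axis_def)
  ultimately show ?thesis unfolding Gf_def by simp
qed

lemma NQ_two:
  fixes a0 j1 :: "'n::finite"
  assumes j1: "j1 \<noteq> a0"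
  shows "Nf a0 (axis a0 p + axis j1 q) = cmod p + (cmod q)^2"
    and "Qf a0 (axis a0 p + axis j1 q) = cmod (p + q^2)"
proof -
  have c: "(axis a0 p + axis j1 q) $ j = (if j = j1 then q else 0)" if "j \<noteq> a0" for j
    using that j1 by (simp add: axis_def)
  have "(\<Sum>j\<in>-{a0}. (cmod ((axis a0 p + axis j1 q) $ j))^2) = (\<Sum>j\<in>-{a0}. if j = j1 then (cmod q)^2 else 0)"
    using j1 by (intro sum.cong refl) (auto simp: axis_def)
  also have "\<dots> = (cmod q)^2" using j1 by simp
  finally show "Nf a0 (axis a0 p + axis j1 q) = cmod p + (cmod q)^2"
    unfolding Nf_def using j1 by (simp add: axis_def)
  have "(\<Sum>j\<in>-{a0}. ((axis a0 p + axis j1 q) $ j)^2) = (\<Sum>j\<in>-{a0}. if j = j1 then q^2 else 0)"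
    using j1 by (intro sum.cong refl) (auto simp: axis_def)
  also have "\<dots> = q^2" using j1 by simp
  finally show "Qf a0 (axis a0 p + axis j1 q) = cmod (p + q^2)"
    unfolding Qf_def using j1 by (simp add: axis_def)
qed

lemma test_point:
  fixes a0 j1 :: "'n::finite" and \<alpha> :: complex
  assumes j1: "j1 \<noteq> a0" and a1: "cmod \<alpha> = 1" and an1: "\<alpha> \<noteq> 1"
  shows "axis a0 (-(1/4) / \<alpha>) + axis j1 (1/2) \<in> LL a0"
    and "axis a0 (-(1/4)) + axis j1 (1/2) \<notin> LL a0"
proof -
  have a0: "\<alpha> \<noteq> 0" using a1 by auto
  define Q where "Q = cmod (-(1/4) / \<alpha> + (1/2)^2)"
  have "-(1/4) / \<alpha> + (1/2)^2 \<noteq> 0"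
  proof
    assume "-(1/4) / \<alpha> + (1/2)^2 = 0"
    then have "1 / \<alpha> = 1" by (simp add: field_simps power2_eq_square)
    then show False using an1 a0 by (simp add: field_simps)
  qed
  then have Q: "Q > 0" unfolding Q_def by simp
  have N: "Nf a0 (axis a0 (-(1/4) / \<alpha>) + axis j1 (1/2)) = 1/2"
    using NQ_two(1)[OF j1] a1 by (simp add: norm_divide power2_eq_square)
  have "sqrt ((1/2)^2 - Q^2) < sqrt ((1/2)^2)" by (rule real_sqrt_less_mono) (use Q in simp)
  moreover have "sqrt ((1/2::real)^2) = 1/2" by simp
  ultimately have "sqrt ((1/2)^2 - Q^2) < 1/2" by simp
  then show "axis a0 (-(1/4) / \<alpha>) + axis j1 (1/2) \<in> LL a0"
    unfolding LL_char mem_Collect_eq Gf_def N NQ_two(2)[OF j1] Q_def[symmetric] by simp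
  have N2: "Nf a0 (axis a0 (-(1/4)) + axis j1 (1/2)) = 1/2"
    using NQ_two(1)[OF j1] by (simp add: power2_eq_square)
  have Q2: "Qf a0 (axis a0 (-(1/4)) + axis j1 (1/2)) = 0"
    using NQ_two(2)[OF j1] by (simp add: power2_eq_square)
  show "axis a0 (-(1/4)) + axis j1 (1/2) \<notin> LL a0"
    unfolding LL_char mem_Collect_eq Gf_def N2 Q2 by (simp add: real_sqrt_divide)
qed

lemma Rm_zero[simp]: "Rm a0 c 0 = 0"
  by (simp add: vec_eq_iff Rm_def)

lemma Rm_LL_unit: "cmod c = 1 \<Longrightarrow> w \<in> LL a0 \<Longrightarrow> Rm a0 c w \<in> LL a0"
  by (rule Rm_in_LL) auto

lemma Rm_inv_l: "c \<noteq> 0 \<Longrightarrow> Rm a0 (inverse c) (Rm a0 c x) = x"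
  by (simp add: Rm_mult)

locale autset =
  fixes a0 :: "'n::finite" and F G :: "complex^'n \<Rightarrow> complex^'n"
  assumes holoF: "holo_on F (LL a0)" and imgF: "F ` LL a0 \<subseteq> LL a0"
    and holoG: "holo_on G (LL a0)" and imgG: "G ` LL a0 \<subseteq> LL a0"
    and GF: "\<And>z. z \<in> LL a0 \<Longrightarrow> G (F z) = z" and FG: "\<And>z. z \<in> LL a0 \<Longrightarrow> F (G z) = z"
    and fixF: "\<forall>y\<in>LL a0. y$a0 = 0 \<longrightarrow> F y = y"
begin

lemma fixG: "\<forall>y\<in>LL a0. y$a0 = 0 \<longrightarrow> G y = y"
  using fixF GF by metis

definition T where "T c x = Rm a0 (inverse c) (G (Rm a0 c (F x)))"

context
  fixes c :: complex
  assumes c1: "cmod c = 1"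
begin

lemma c0: "c \<noteq> 0" using c1 by auto

lemma T_img: "T c ` LL a0 \<subseteq> LL a0"
proof
  fix y assume "y \<in> T c ` LL a0"
  then obtain x where x: "x \<in> LL a0" "y = T c x" by auto
  have "F x \<in> LL a0" using imgF x by auto
  then have "Rm a0 c (F x) \<in> LL a0" using c1 by (rule Rm_LL_unit[rotated])
  then have "G (Rm a0 c (F x)) \<in> LL a0" using imgG by auto
  then show "y \<in> LL a0" unfolding x T_def using c1 by (intro Rm_LL_unit) (auto simp: norm_inverse)
qed

lemma T_holo: "holo_on (T c) (LL a0)"
proof -
  have i1: "(\<lambda>x. Rm a0 c (F x)) ` LL a0 \<subseteq> LL a0"
    using imgF c1 Rm_LL_unit by blast
  have h1: "holo_on (\<lambda>x. Rm a0 c (F x)) (LL a0)"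
    by (rule holo_on_comp[OF holoF holo_on_Rm imgF])
  have h2: "holo_on (\<lambda>x. G (Rm a0 c (F x))) (LL a0)"
    by (rule holo_on_comp[OF h1 holoG i1])
  show ?thesis unfolding T_def[abs_def]
    by (rule holo_on_comp[OF h2 holo_on_Rm]) (rule subset_UNIV)
qed

lemma T_fix: "\<forall>y\<in>LL a0. y$a0 = 0 \<longrightarrow> T c y = y"
proof (intro ballI impI)
  fix y assume y: "y \<in> LL a0" "y$a0 = 0"
  have "Rm a0 c y \<in> LL a0" using Rm_LL_unit[OF c1 y(1)] .
  moreover have "Rm a0 c y $ a0 = 0" using y by (simp add: Rm_nth)
  ultimately have "G (Rm a0 c y) = Rm a0 c y" using fixG by blast
  then show "T c y = y" unfolding T_def using fixF y c0 by (simp add: Rm_inv_l)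
qed

end

end

context autset begin

lemma F0: "F 0 = 0" using fixF zero_in_LL[of a0] by simp
lemma G0: "G 0 = 0" using fixG zero_in_LL[of a0] by simp

context
  fixes c :: complex
  assumes c1: "cmod c = 1"
begin

lemma alpha_T: "alpha a0 (T c) = 1"
proof -
  obtain F' where F': "(F has_derivative F') (at 0)" "\<forall>c v. F' (c *s v) = c *s F' v"
    using holoF zero_in_LL[of a0] unfolding holo_on_def by blast
  obtain G' where G': "(G has_derivative G') (at 0)" "\<forall>c v. G' (c *s v) = c *s G' v"
    using holoG zero_in_LL[of a0] unfolding holo_on_def by blast
  have dG: "G' v = v" if "v$a0 = 0" for v by (rule dH[OF holoG fixG G' that])
  have d1: "((\<lambda>x. G (F x)) has_derivative (\<lambda>x. G' (F' x))) (at 0)"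
    using diff_chain_at[OF F'(1), of G G'] F0 G'(1) by (simp add: o_def)
  have d2: "((\<lambda>x. G (F x)) has_derivative (\<lambda>x. x)) (at 0)"
    by (rule has_derivative_transform_within_open[OF has_derivative_ident open_LL[of a0] zero_in_LL[of a0]]) (simp add: GF)
  have GF': "G' (F' x) = x" for x using has_derivative_unique[OF d1 d2] by metis
  have blG: "bounded_linear G'" using G'(1) by (rule has_derivative_bounded_linear)
  have dT1: "((\<lambda>x. Rm a0 c (F x)) has_derivative (\<lambda>x. Rm a0 c (F' x))) (at 0)"
    using diff_chain_at[OF F'(1) bounded_linear_imp_has_derivative[OF bl_Rm]] by (simp add: o_def)
  have dT2: "((\<lambda>x. G (Rm a0 c (F x))) has_derivative (\<lambda>x. G' (Rm a0 c (F' x)))) (at 0)"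
    using diff_chain_at[OF dT1, of G G'] F0 G'(1) by (simp add: o_def)
  have dT: "(T c has_derivative (\<lambda>x. Rm a0 (inverse c) (G' (Rm a0 c (F' x))))) (at 0)"
    using diff_chain_at[OF dT2 bounded_linear_imp_has_derivative[OF bl_Rm]] unfolding T_def[abs_def] by (simp add: o_def)
  have hT: "\<forall>d v. Rm a0 (inverse c) (G' (Rm a0 c (F' (d *s v)))) = d *s Rm a0 (inverse c) (G' (Rm a0 c (F' v)))"
    using F'(2) G'(2) by (simp add: Rm_smult)
  have al: "alpha a0 (T c) = Rm a0 (inverse c) (G' (Rm a0 c (F' (axis a0 1)))) $ a0"
    by (rule alpha_eq[OF dT hT])
  define e1 where "e1 = axis a0 (1::complex)"
  define a where "a = F' e1 $ a0"
  define b where "b = hp a0 (F' e1)"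
  have Fe: "F' e1 = a *s e1 + b" unfolding a_def b_def e1_def by (simp add: vec_eq_iff hp_def axis_def)
  have b0: "b $ a0 = 0" unfolding b_def by simp
  have Gab: "G' (x *s e1 + y *s b) = x *s G' e1 + y *s b" for x y
  proof -
    have "G' (x *s e1 + y *s b) = G' (x *s e1) + G' (y *s b)" by (rule lin_add[OF blG])
    also have "\<dots> = x *s G' e1 + y *s b" using G'(2) dG[of "y *s b"] b0 by simp
    finally show ?thesis .
  qed
  have "e1 = G' (F' e1)" by (simp add: GF')
  also have "\<dots> = a *s G' e1 + 1 *s b" unfolding Fe using Gab[of a 1] by simp
  finally have "e1 $ a0 = (a *s G' e1 + 1 *s b) $ a0" by simp
  then have aG: "a * G' e1 $ a0 = 1" unfolding e1_def using b0 by (simp add: axis_def)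
  have "Rm a0 c (F' e1) = (c^2 * a) *s e1 + c *s b"
    unfolding Fe using b0 by (simp add: vec_eq_iff Rm_def wt_def e1_def axis_def hp_def b_def)
  then have "G' (Rm a0 c (F' e1)) = (c^2 * a) *s G' e1 + c *s b" using Gab by simp
  then have "Rm a0 (inverse c) (G' (Rm a0 c (F' e1))) $ a0 = (inverse c)^2 * (c^2 * a * G' e1 $ a0)"
    using b0 by (simp add: Rm_nth wt_def)
  also have "\<dots> = a * G' e1 $ a0" using c0[OF c1] by (simp add: field_simps)
  finally show ?thesis using al aG unfolding e1_def by simp
qed

lemma T_init:
  assumes u: "u \<in> LL a0"
  shows "((\<lambda>\<zeta>. (T c (Rm a0 \<zeta> u) $ j - \<zeta>^(wt a0 j) * u$j) / \<zeta>^(wt a0 j)) \<longlongrightarrow> 0) (at 0)"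
proof (cases "j = a0")
  case True
  have "((\<lambda>\<zeta>. (T c (Rm a0 \<zeta> u) $ a0 - alpha a0 (T c) * \<zeta>^2 * u$a0) / \<zeta>^2) \<longlongrightarrow> 0) (at 0)"
    by (rule init_a0[OF T_holo[OF c1] T_img[OF c1] T_fix[OF c1]])
  then show ?thesis using True by (simp add: alpha_T wt_def)
next
  case False
  have "((\<lambda>\<zeta>. (T c (Rm a0 \<zeta> u) $ j - \<zeta> * u$j) / \<zeta>) \<longlongrightarrow> 0) (at 0)"
    by (rule init_other[OF T_holo[OF c1] T_fix[OF c1] False])
  then show ?thesis using False by (simp add: wt_def)
qed

lemma T_id: "w \<in> LL a0 \<Longrightarrow> T c w = w"
proof -
  interpret wc a0 "T c"
    by unfold_locales (use T_holo[OF c1] T_img[OF c1] T_init in auto)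
  show "w \<in> LL a0 \<Longrightarrow> T c w = w" by (rule wc_id)
qed

lemma F_commute:
  assumes w: "w \<in> LL a0"
  shows "F (Rm a0 c w) = Rm a0 c (F w)"
proof -
  have "Rm a0 c (T c w) = Rm a0 c w" using T_id[OF w] by simp
  then have "G (Rm a0 c (F w)) = Rm a0 c w" unfolding T_def using c0[OF c1] by (simp add: Rm_inv)
  moreover have "Rm a0 c (F w) \<in> LL a0" using imgF w c1 Rm_LL_unit by blast
  ultimately show ?thesis using FG by metis
qed

end

end

context autset begin

lemma F_form:
  assumes w: "w \<in> LL a0"
  shows "F w $ j = (if j = a0 then alpha a0 F * w$a0 else w$j)"
proof -
  obtain \<rho> where \<rho>: "\<rho> > 1" "\<forall>c. cmod c < \<rho> \<longrightarrow> Rm a0 c w \<in> LL a0"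
    using LL_ext[OF w] by blast
  define f where "f \<zeta> = F (Rm a0 \<zeta> w) $ j" for \<zeta>
  have hol: "f holomorphic_on ball 0 \<rho>"
    unfolding f_def by (rule one_var_holo[OF holoF]) (use \<rho> in auto)
  have rot: "f (c * \<zeta>) = c^(wt a0 j) * f \<zeta>" if "cmod c = 1" "\<zeta> \<in> ball 0 \<rho>" for c \<zeta>
  proof -
    have "Rm a0 \<zeta> w \<in> LL a0" using \<rho> that by auto
    then have "F (Rm a0 c (Rm a0 \<zeta> w)) = Rm a0 c (F (Rm a0 \<zeta> w))" by (rule F_commute[OF that(1)])
    then show ?thesis unfolding f_def Rm_mult by (simp add: Rm_nth)
  qed
  have lim: "((\<lambda>\<zeta>. (f \<zeta> - \<zeta>^(wt a0 j) * (if j = a0 then alpha a0 F * w$a0 else w$j)) / \<zeta>^(wt a0 j)) \<longlongrightarrow> 0) (at 0)"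
  proof (cases "j = a0")
    case True
    have "((\<lambda>\<zeta>. (F (Rm a0 \<zeta> w) $ a0 - alpha a0 F * \<zeta>^2 * w$a0) / \<zeta>^2) \<longlongrightarrow> 0) (at 0)"
      by (rule init_a0[OF holoF imgF fixF])
    then show ?thesis using True unfolding f_def by (simp add: wt_def mult_ac)
  next
    case False
    have "((\<lambda>\<zeta>. (F (Rm a0 \<zeta> w) $ j - \<zeta> * w$j) / \<zeta>) \<longlongrightarrow> 0) (at 0)"
      by (rule init_other[OF holoF fixF False])
    then show ?thesis using False unfolding f_def by (simp add: wt_def)
  qed
  have "f 1 = (if j = a0 then alpha a0 F * w$a0 else w$j)"
    by (rule rot_final[OF hol \<rho>(1) rot lim])
  then show ?thesis unfolding f_def by simp
qed

lemma alpha_F_norm: "cmod (alpha a0 F) = 1"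
proof -
  define \<alpha> where "\<alpha> = alpha a0 F"
  have up: "cmod \<alpha> * t < 1" if t: "0 \<le> t" "t < 1" for t :: real
  proof -
    have "axis a0 (of_real t) \<in> LL a0" unfolding LL_char using t by (simp add: Gf_axis)
    then have "F (axis a0 (of_real t)) \<in> LL a0" using imgF by auto
    moreover have "F (axis a0 (of_real t)) = axis a0 (\<alpha> * of_real t)"
      using F_form[OF \<open>axis a0 (of_real t) \<in> LL a0\<close>] unfolding \<alpha>_def by (simp add: vec_eq_iff axis_def)
    ultimately have "Gf a0 (axis a0 (\<alpha> * of_real t)) < 1" unfolding LL_char by simp
    then show ?thesis using t by (simp add: Gf_axis norm_mult)
  qed
  have lo: "t < cmod \<alpha>" if t: "0 < t" "t < 1" for t :: real
  proof -
    have inL: "axis a0 (of_real t) \<in> LL a0" unfolding LL_char using t by (simp add: Gf_axis)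
    define z where "z = G (axis a0 (of_real t))"
    have zL: "z \<in> LL a0" unfolding z_def using imgG inL by auto
    have "axis a0 (of_real t) = F z" unfolding z_def using FG[OF inL] by simp
    then have "of_real t = F z $ a0" by (metis axis_nth)
    also have "\<dots> = \<alpha> * z $ a0" using F_form[OF zL] unfolding \<alpha>_def by simp
    finally have "cmod (of_real t :: complex) = cmod (\<alpha> * z $ a0)" by simp
    then have tt: "t = cmod \<alpha> * cmod (z $ a0)" using t by (simp add: norm_mult)
    have zb: "cmod (z $ a0) < 1" by (rule LL_coord_bound[OF zL])
    have "cmod \<alpha> > 0" using tt t by (cases "cmod \<alpha> = 0") auto
    then have "cmod \<alpha> * cmod (z $ a0) < cmod \<alpha> * 1" using zb by (intro mult_strict_left_mono)
    then show ?thesis using tt by simp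
  qed
  have "cmod \<alpha> \<le> 1"
  proof (rule ccontr)
    assume "\<not> cmod \<alpha> \<le> 1"
    then have "1 / cmod \<alpha> < 1" "0 \<le> 1 / cmod \<alpha>" by (auto simp: divide_less_eq)
    from up[OF this(2,1)] \<open>\<not> cmod \<alpha> \<le> 1\<close> show False by (simp split: if_splits)
  qed
  moreover have "cmod \<alpha> \<ge> 1"
  proof (rule ccontr)
    assume a: "\<not> cmod \<alpha> \<ge> 1"
    then have "cmod \<alpha> < 1" by simp
    then have "(cmod \<alpha> + 1)/2 < cmod \<alpha>" by (intro lo) (auto simp: add_nonneg_pos)
    then show False using \<open>cmod \<alpha> < 1\<close> by simp
  qed
  ultimately show ?thesis unfolding \<alpha>_def by simp
qed

lemma alpha_F_1:
  assumes j1: "j1 \<noteq> a0"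
  shows "alpha a0 F = 1"
proof (rule ccontr)
  assume an: "alpha a0 F \<noteq> 1"
  define \<alpha> where "\<alpha> = alpha a0 F"
  have a1: "cmod \<alpha> = 1" unfolding \<alpha>_def by (rule alpha_F_norm)
  have a0: "\<alpha> \<noteq> 0" using a1 by auto
  define w where "w = axis a0 (-(1/4) / \<alpha>) + axis j1 (1/2::complex)"
  have wL: "w \<in> LL a0" unfolding w_def by (rule test_point(1)[OF j1 a1 an[folded \<alpha>_def]])
  have "F w = axis a0 (-(1/4)) + axis j1 (1/2)"
    using F_form[OF wL] j1 a0 unfolding \<alpha>_def[symmetric] w_def by (simp add: vec_eq_iff axis_def)
  moreover have "F w \<in> LL a0" using imgF wL by auto
  ultimately show False using test_point(2)[OF j1 a1 an[folded \<alpha>_def]] by simp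
qed

lemma F_id:
  assumes j1: "j1 \<noteq> a0" and w: "w \<in> LL a0"
  shows "F w = w"
  using F_form[OF w] alpha_F_1[OF j1] by (simp add: vec_eq_iff)

end

theorem lemma5p5:
  fixes a0 :: "'n::finite" and F :: "complex^'n \<Rightarrow> complex^'n"
  assumes "CARD('n) \<ge> 2"
    and "F \<in> Aut (LL a0)"
    and "\<forall>z. z$a0 = 0 \<and> z \<in> Lset_on (- {a0}) \<longrightarrow> F z = z"
  shows "\<forall>z\<in>LL a0. F z = z"
proof -
  obtain G where G: "holo_on F (LL a0)" "F ` LL a0 \<subseteq> LL a0" "holo_on G (LL a0)" "G ` LL a0 \<subseteq> LL a0"
    "\<forall>z\<in>LL a0. G (F z) = z \<and> F (G z) = z"
    using assms(2) unfolding Aut_def by blast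
  have fixF: "\<forall>y\<in>LL a0. y$a0 = 0 \<longrightarrow> F y = y"
  proof (intro ballI impI)
    fix y assume y: "y \<in> LL a0" "y$a0 = 0"
    then have "y \<in> Lset_on (- {a0})" using H_in_LL[of y a0] by simp
    then show "F y = y" using assms(3) y(2) by simp
  qed
  have GF: "\<And>z. z \<in> LL a0 \<Longrightarrow> G (F z) = z" and FG: "\<And>z. z \<in> LL a0 \<Longrightarrow> F (G z) = z"
    using G(5) by auto
  interpret autset a0 F G
    by (rule autset.intro[OF G(1) G(2) G(3) G(4) GF FG fixF])
  obtain j1 :: 'n where j1: "j1 \<noteq> a0"
  proof (cases "\<exists>j::'n. j \<noteq> a0")
    case True then show ?thesis using that by blast
  next
    case False
    then have "(UNIV :: 'n set) = {a0}" by auto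
    then have "CARD('n) = 1" by (metis card.empty card_insert_disjoint empty_iff finite.emptyI One_nat_def)
    then show ?thesis using assms(1) by simp
  qed
  show ?thesis using F_id[OF j1] by blast
qed

end
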